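(* Let $n\in\mathbb{N}$, $N=2^{2n}$ and $1\le\kappa\le 2^n$. Any quantum algorithm that makes $T$ queries to $\varphi$ and $\varphi^{-1}$, where $\varphi\sim S_N^{\kappa}$ is a uniformly random permutation of $\{0,1\}^{2n}$ with exactly $\kappa$ zero pairs, and outputs a zero pair of $\varphi$ with probability $\epsilon>0$, satisfies $$\epsilon\le 2(T+1)\sqrt{\frac{\kappa}{2^n}}.$$
   Context: A zero pair of a permutation $\varphi$ of $\{0,1\}^{2n}$ is a pair $(x,y)\in\{0,1\}^n\times\{0,1\}^n$ with $\varphi(x\|0^n)=y\|0^n$; $S_N^{\kappa}$ is the set of permutations of $\{0,1\}^{2n}$ with exactly $\kappa$ zero pairs. Queries are to the unitaries $O_\varphi:|a\rangle|b\rangle\mapsto|a\rangle|b\oplus\varphi(a)\rangle$ and $O_{\varphi^{-1}}:|a\rangle|b\rangle\mapsto|a\rangle|b\oplus\varphi^{-1}(a)\rangle$. *)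

theory Defs
  imports "HOL-Analysis.Analysis" "HOL-Combinatorics.Permutations"
begin

text \<open>Bit strings in {0,1}^m are encoded as naturals below 2^m; the concatenation
 x || 0^n (x of length n) is encoded as x * 2^n.  XOR of bit strings is the bitwise
 xor on naturals.\<close>

definition NN :: "nat \<Rightarrow> nat" where "NN n = 2 ^ (2 * n)"

definition zero_pair :: "nat \<Rightarrow> (nat \<Rightarrow> nat) \<Rightarrow> nat \<times> nat \<Rightarrow> bool" where
  "zero_pair n \<phi> p \<longleftrightarrow> fst p < 2 ^ n \<and> snd p < 2 ^ n \<and> \<phi> (fst p * 2 ^ n) = snd p * 2 ^ n"

definition zero_pairs :: "nat \<Rightarrow> (nat \<Rightarrow> nat) \<Rightarrow> (nat \<times> nat) set" where
  "zero_pairs n \<phi> = {p. zero_pair n \<phi> p}"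

definition S_kappa :: "nat \<Rightarrow> nat \<Rightarrow> (nat \<Rightarrow> nat) set" where
  "S_kappa n \<kappa> = {\<phi>. \<phi> permutes {..<NN n} \<and> card (zero_pairs n \<phi>) = \<kappa>}"

text \<open>Computational basis of the algorithm's register: (c, a, b, w) where
 c selects the query type (False: O_phi, True: O_phi^-1), a and b are the query
 registers in {0,1}^{2n}, and w ranges over an arbitrary finite workspace.\<close>
type_synonym 'w basis = "bool \<times> nat \<times> nat \<times> 'w"
type_synonym 'w qstate = "'w basis \<Rightarrow> complex"
type_synonym 'w qmat = "'w basis \<Rightarrow> 'w basis \<Rightarrow> complex"

definition Basis :: "nat \<Rightarrow> 'w basis set" where
  "Basis n = UNIV \<times> {..<NN n} \<times> {..<NN n} \<times> UNIV"

definition apply_mat :: "nat \<Rightarrow> 'w qmat \<Rightarrow> 'w qstate \<Rightarrow> 'w qstate" where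
  "apply_mat n U v = (\<lambda>s. \<Sum>t\<in>Basis n. U s t * v t)"

definition unitary_mat :: "nat \<Rightarrow> ('w::finite) qmat \<Rightarrow> bool" where
  "unitary_mat n U \<longleftrightarrow> (\<forall>s\<in>Basis n. \<forall>s'\<in>Basis n.
      (\<Sum>t\<in>Basis n. cnj (U t s) * U t s') = (if s = s' then 1 else 0))"

definition query_op :: "(nat \<Rightarrow> nat) \<Rightarrow> 'w qstate \<Rightarrow> 'w qstate" where
  "query_op \<phi> v = (\<lambda>(c, a, b, w). v (c, a, xor b ((if c then inv \<phi> else \<phi>) a), w))"

text \<open>run n phi [U_0,...,U_T] v = U_T O ... O U_1 O U_0 v  (T queries).\<close>
fun run :: "nat \<Rightarrow> (nat \<Rightarrow> nat) \<Rightarrow> 'w qmat list \<Rightarrow> 'w qstate \<Rightarrow> 'w qstate" where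
  "run n \<phi> [] v = v"
| "run n \<phi> [U] v = apply_mat n U v"
| "run n \<phi> (U # V # Us) v = run n \<phi> (V # Us) (query_op \<phi> (apply_mat n U v))"

definition ket :: "'w basis \<Rightarrow> 'w qstate" where
  "ket s0 = (\<lambda>s. if s = s0 then 1 else 0)"

definition success_prob :: "nat \<Rightarrow> (nat \<Rightarrow> nat) \<Rightarrow> 'w qmat list \<Rightarrow> 'w basis \<Rightarrow>
    ('w basis \<Rightarrow> nat \<times> nat) \<Rightarrow> real" where
  "success_prob n \<phi> Us s0 out =
     (\<Sum>s\<in>Basis n. if zero_pair n \<phi> (out s) then (cmod (run n \<phi> Us (ket s0) s))\<^sup>2 else 0)"

definition avg_success :: "nat \<Rightarrow> nat \<Rightarrow> 'w qmat list \<Rightarrow> 'w basis \<Rightarrow>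
    ('w basis \<Rightarrow> nat \<times> nat) \<Rightarrow> real" where
  "avg_success n \<kappa> Us s0 out =
     (\<Sum>\<phi>\<in>S_kappa n \<kappa>. success_prob n \<phi> Us s0 out) / real (card (S_kappa n \<kappa>))"

end

theory Submission
  imports Defs
begin


definition Finv :: "nat set \<Rightarrow> nat set \<Rightarrow> nat \<Rightarrow> (nat \<Rightarrow> nat) set" where
 "Finv Z Y k = {\<sigma>. \<sigma> permutes (Z \<union> Y) \<and> (\<forall>x. \<sigma> (\<sigma> x) = x) \<and>
    (\<forall>x\<in>Z. \<sigma> x \<noteq> x \<longrightarrow> \<sigma> x \<in> Y) \<and> (\<forall>x\<in>Y. \<sigma> x \<noteq> x \<longrightarrow> \<sigma> x \<in> Z) \<and>
    card {x\<in>Z. \<sigma> x \<noteq> x} = k}"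

lemma bij_permutesI:
  assumes "bij p" "\<And>x. x \<notin> S \<Longrightarrow> p x = x" shows "p permutes S"
  using assms unfolding permutes_def bij_def inj_def surj_def by metis

lemma conj_Finv:
  assumes "bij \<pi>" "\<sigma> \<in> Finv Z Y k"
  shows "\<pi> \<circ> \<sigma> \<circ> inv \<pi> \<in> Finv (\<pi>`Z) (\<pi>`Y) k"
proof -
  have ip: "\<And>x. inv \<pi> (\<pi> x) = x" "\<And>x. \<pi> (inv \<pi> x) = x"
    using assms(1) by (auto simp: bij_def inv_f_f surj_f_inv_f)
  have s: "\<sigma> permutes (Z \<union> Y)" "\<And>x. \<sigma> (\<sigma> x) = x" "\<And>x. x\<in>Z \<Longrightarrow> \<sigma> x \<noteq> x \<Longrightarrow> \<sigma> x \<in> Y"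
     "\<And>x. x\<in>Y \<Longrightarrow> \<sigma> x \<noteq> x \<Longrightarrow> \<sigma> x \<in> Z" "card {x\<in>Z. \<sigma> x \<noteq> x} = k"
    using assms(2) unfolding Finv_def by auto
  have bs: "bij \<sigma>" using s(1) permutes_bij by blast
  have "bij (\<pi> \<circ> \<sigma> \<circ> inv \<pi>)"
    using assms(1) bs by (intro bij_comp bij_imp_bij_inv)
  moreover have "(\<pi> \<circ> \<sigma> \<circ> inv \<pi>) x = x" if "x \<notin> \<pi>`(Z \<union> Y)" for x
  proof -
    have "inv \<pi> x \<notin> Z \<union> Y"
    proof
      assume "inv \<pi> x \<in> Z \<union> Y"
      then have "\<pi> (inv \<pi> x) \<in> \<pi>`(Z\<union>Y)" by (rule imageI)
      then have xin: "x \<in> \<pi>`(Z\<union>Y)" by (simp only: ip(2))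
      show False using that xin by (rule notE)
    qed
    then have "\<sigma> (inv \<pi> x) = inv \<pi> x" by (rule permutes_not_in[OF s(1)])
    then show ?thesis using ip by simp
  qed
  ultimately have "(\<pi> \<circ> \<sigma> \<circ> inv \<pi>) permutes (\<pi>`Z \<union> \<pi>`Y)"
    by (intro bij_permutesI) (auto simp: image_Un)
  moreover have "\<forall>x. (\<pi> \<circ> \<sigma> \<circ> inv \<pi>) ((\<pi> \<circ> \<sigma> \<circ> inv \<pi>) x) = x"
    using ip s(2) by simp
  moreover have "\<forall>x\<in>\<pi>`Z. (\<pi> \<circ> \<sigma> \<circ> inv \<pi>) x \<noteq> x \<longrightarrow> (\<pi> \<circ> \<sigma> \<circ> inv \<pi>) x \<in> \<pi>`Y"
    using ip s(3) by auto (metis imageI)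
  moreover have "\<forall>x\<in>\<pi>`Y. (\<pi> \<circ> \<sigma> \<circ> inv \<pi>) x \<noteq> x \<longrightarrow> (\<pi> \<circ> \<sigma> \<circ> inv \<pi>) x \<in> \<pi>`Z"
    using ip s(4) by auto (metis imageI)
  moreover have "{x\<in>\<pi>`Z. (\<pi> \<circ> \<sigma> \<circ> inv \<pi>) x \<noteq> x} = \<pi> ` {x\<in>Z. \<sigma> x \<noteq> x}"
    using ip by auto (metis ip(1))
  moreover have "card (\<pi> ` {x\<in>Z. \<sigma> x \<noteq> x}) = k"
    using s(5) bij_is_inj[OF assms(1)] by (simp add: card_image inj_on_subset)
  ultimately show ?thesis unfolding Finv_def by simp
qed

lemma bij_betw_conj_Finv:
  assumes "bij \<pi>"
  shows "bij_betw (\<lambda>\<sigma>. \<pi> \<circ> \<sigma> \<circ> inv \<pi>) (Finv Z Y k) (Finv (\<pi>`Z) (\<pi>`Y) k)"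
proof -
  have ip: "\<And>x. inv \<pi> (\<pi> x) = x" "\<And>x. \<pi> (inv \<pi> x) = x"
    using assms(1) by (auto simp: bij_def inv_f_f surj_f_inv_f)
  have bi: "bij (inv \<pi>)" using assms bij_imp_bij_inv by blast
  have ii: "inv (inv \<pi>) = \<pi>" using assms inv_inv_eq by blast
  have iZ: "inv \<pi> ` \<pi> ` A = A" for A using ip by (simp add: image_image)
  show ?thesis
  proof (rule bij_betw_byWitness[where f'="\<lambda>\<sigma>. inv \<pi> \<circ> \<sigma> \<circ> \<pi>"])
    show "\<forall>a\<in>Finv Z Y k. inv \<pi> \<circ> (\<pi> \<circ> a \<circ> inv \<pi>) \<circ> \<pi> = a"
      using ip by (auto simp: fun_eq_iff)
    show "\<forall>a'\<in>Finv (\<pi> ` Z) (\<pi> ` Y) k. \<pi> \<circ> (inv \<pi> \<circ> a' \<circ> \<pi>) \<circ> inv \<pi> = a'"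
      using ip by (auto simp: fun_eq_iff)
    show "(\<lambda>\<sigma>. \<pi> \<circ> \<sigma> \<circ> inv \<pi>) ` Finv Z Y k \<subseteq> Finv (\<pi> ` Z) (\<pi> ` Y) k"
      using conj_Finv[OF assms] by blast
    show "(\<lambda>\<sigma>. inv \<pi> \<circ> \<sigma> \<circ> \<pi>) ` Finv (\<pi> ` Z) (\<pi> ` Y) k \<subseteq> Finv Z Y k"
    proof
      fix x assume "x \<in> (\<lambda>\<sigma>. inv \<pi> \<circ> \<sigma> \<circ> \<pi>) ` Finv (\<pi> ` Z) (\<pi> ` Y) k"
      then obtain \<tau> where t: "\<tau> \<in> Finv (\<pi> ` Z) (\<pi> ` Y) k" "x = inv \<pi> \<circ> \<tau> \<circ> \<pi>" by blast
      have "inv \<pi> \<circ> \<tau> \<circ> inv (inv \<pi>) \<in> Finv (inv \<pi> ` \<pi> ` Z) (inv \<pi> ` \<pi> ` Y) k"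
        by (rule conj_Finv[OF bi t(1)])
      then show "x \<in> Finv Z Y k" unfolding ii iZ t(2) .
    qed
  qed
qed

lemma finite_Finv: "finite Z \<Longrightarrow> finite Y \<Longrightarrow> finite (Finv Z Y k)"
proof -
  assume a: "finite Z" "finite Y"
  have "Finv Z Y k \<subseteq> {\<sigma>. \<sigma> permutes (Z\<union>Y)}" unfolding Finv_def by blast
  moreover have "finite {\<sigma>. \<sigma> permutes (Z\<union>Y)}" using a by (intro finite_permutations) simp
  ultimately show ?thesis by (rule finite_subset)
qed



lemma card_filter_sum: "finite A \<Longrightarrow> card {x\<in>A. P x} = (\<Sum>x\<in>A. if P x then 1 else (0::nat))"
  by (simp add: sum.inter_filter[symmetric])

lemma Finv_D:
  assumes "\<sigma> \<in> Finv Z Y k"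
  shows "\<sigma> permutes (Z \<union> Y)" "\<And>x. \<sigma> (\<sigma> x) = x" "\<And>x. x\<in>Z \<Longrightarrow> \<sigma> x \<noteq> x \<Longrightarrow> \<sigma> x \<in> Y"
     "\<And>x. x\<in>Y \<Longrightarrow> \<sigma> x \<noteq> x \<Longrightarrow> \<sigma> x \<in> Z" "card {x\<in>Z. \<sigma> x \<noteq> x} = k"
  using assms unfolding Finv_def by auto

lemma Finv_cardY:
  assumes "\<sigma> \<in> Finv Z Y k" "Z \<inter> Y = {}"
  shows "card {x\<in>Y. \<sigma> x \<noteq> x} = k"
proof -
  note s = Finv_D[OF assms(1)]
  have "bij_betw \<sigma> {x\<in>Z. \<sigma> x \<noteq> x} {x\<in>Y. \<sigma> x \<noteq> x}"
  proof (rule bij_betw_byWitness[where f'=\<sigma>])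
    show "\<forall>a\<in>{x \<in> Z. \<sigma> x \<noteq> x}. \<sigma> (\<sigma> a) = a" using s(2) by simp
    show "\<forall>a\<in>{x \<in> Y. \<sigma> x \<noteq> x}. \<sigma> (\<sigma> a) = a" using s(2) by simp
    show "\<sigma> ` {x \<in> Z. \<sigma> x \<noteq> x} \<subseteq> {x \<in> Y. \<sigma> x \<noteq> x}"
    proof
      fix y assume "y \<in> \<sigma> ` {x \<in> Z. \<sigma> x \<noteq> x}"
      then obtain x where x: "x \<in> Z" "\<sigma> x \<noteq> x" "y = \<sigma> x" by blast
      have "\<sigma> y \<noteq> y" using x s(2) by metis
      then show "y \<in> {x \<in> Y. \<sigma> x \<noteq> x}" using x s(3) by simp
    qed
    show "\<sigma> ` {x \<in> Y. \<sigma> x \<noteq> x} \<subseteq> {x \<in> Z. \<sigma> x \<noteq> x}"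
    proof
      fix y assume "y \<in> \<sigma> ` {x \<in> Y. \<sigma> x \<noteq> x}"
      then obtain x where x: "x \<in> Y" "\<sigma> x \<noteq> x" "y = \<sigma> x" by blast
      have "\<sigma> y \<noteq> y" using x s(2) by metis
      then show "y \<in> {x \<in> Z. \<sigma> x \<noteq> x}" using x s(4) by simp
    qed
  qed
  then show ?thesis using bij_betw_same_card s(5) by fastforce
qed

lemma transpose_conj_moved:
  fixes \<sigma> :: "nat \<Rightarrow> nat"
  shows "(Transposition.transpose b b' \<circ> \<sigma> \<circ> inv (Transposition.transpose b b')) b' \<noteq> b'
     \<longleftrightarrow> \<sigma> b \<noteq> b"
  by (simp add: Transposition.transpose_def)

lemma tr_in: assumes "a\<in>A \<longleftrightarrow> b\<in>A" "x \<in> A" shows "Transposition.transpose a b x \<in> A"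
proof -
  have "Transposition.transpose a b x = (if x = a then b else if x = b then a else x)"
    by (simp add: Transposition.transpose_def)
  then show ?thesis using assms by presburger
qed

lemma tr_img: assumes h: "a\<in>A \<longleftrightarrow> b\<in>A" shows "Transposition.transpose a b ` A = A"
proof (intro equalityI subsetI)
  fix x assume "x \<in> Transposition.transpose a b ` A"
  then obtain y where y: "y \<in> A" "x = Transposition.transpose a b y" by (rule imageE)
  show "x \<in> A" unfolding y(2) by (rule tr_in[OF h y(1)])
next
  fix x assume x: "x \<in> A"
  have e: "x = Transposition.transpose a b (Transposition.transpose a b x)" by simp
  have "Transposition.transpose a b x \<in> A" by (rule tr_in[OF h x])
  then have "Transposition.transpose a b (Transposition.transpose a b x) \<in> Transposition.transpose a b ` A"
    by (rule imageI)
  then show "x \<in> Transposition.transpose a b ` A" using e by simp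
qed

lemma cnt_equal:
  assumes "b \<in> W" "b' \<in> W" "W = Z \<or> W = Y" "Z \<inter> Y = {}"
  shows "card {\<sigma>\<in>Finv Z Y k. \<sigma> b \<noteq> b} = card {\<sigma>\<in>Finv Z Y k. \<sigma> b' \<noteq> b'}"
proof -
  define \<tau> where "\<tau> = Transposition.transpose b b'"
  have bt: "bij \<tau>" unfolding \<tau>_def by simp
  have tZ: "\<tau> ` Z = Z" "\<tau> ` Y = Y"
  proof -
    have h1: "b \<in> Z \<longleftrightarrow> b' \<in> Z" and h2: "b \<in> Y \<longleftrightarrow> b' \<in> Y" using assms by auto
    show "\<tau> ` Z = Z" unfolding \<tau>_def by (rule tr_img[OF h1])
    show "\<tau> ` Y = Y" unfolding \<tau>_def by (rule tr_img[OF h2])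
  qed
  have bb: "bij_betw (\<lambda>\<sigma>. \<tau> \<circ> \<sigma> \<circ> inv \<tau>) (Finv Z Y k) (Finv Z Y k)"
    using bij_betw_conj_Finv[OF bt, of Z Y k] tZ by simp
  have "bij_betw (\<lambda>\<sigma>. \<tau> \<circ> \<sigma> \<circ> inv \<tau>) {\<sigma>\<in>Finv Z Y k. \<sigma> b \<noteq> b} {\<sigma>\<in>Finv Z Y k. \<sigma> b' \<noteq> b'}"
  proof (rule bij_betw_subset[OF bb])
    show "{\<sigma> \<in> Finv Z Y k. \<sigma> b \<noteq> b} \<subseteq> Finv Z Y k" by blast
    show "(\<lambda>\<sigma>. \<tau> \<circ> \<sigma> \<circ> inv \<tau>) ` {\<sigma> \<in> Finv Z Y k. \<sigma> b \<noteq> b} = {\<sigma> \<in> Finv Z Y k. \<sigma> b' \<noteq> b'}"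
    proof (intro equalityI subsetI)
      fix x assume "x \<in> (\<lambda>\<sigma>. \<tau> \<circ> \<sigma> \<circ> inv \<tau>) ` {\<sigma> \<in> Finv Z Y k. \<sigma> b \<noteq> b}"
      then obtain \<sigma> where s: "\<sigma> \<in> Finv Z Y k" "\<sigma> b \<noteq> b" "x = \<tau> \<circ> \<sigma> \<circ> inv \<tau>" by blast
      have "x \<in> Finv Z Y k" using s bb bij_betwE by blast
      moreover have "x b' \<noteq> b'" using s(2,3) transpose_conj_moved unfolding \<tau>_def by blast
      ultimately show "x \<in> {\<sigma> \<in> Finv Z Y k. \<sigma> b' \<noteq> b'}" by blast
    next
      fix x assume x: "x \<in> {\<sigma> \<in> Finv Z Y k. \<sigma> b' \<noteq> b'}"
      then obtain \<sigma> where s: "\<sigma> \<in> Finv Z Y k" "x = \<tau> \<circ> \<sigma> \<circ> inv \<tau>"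
        using bb unfolding bij_betw_def by blast
      have "\<sigma> b \<noteq> b" using x s transpose_conj_moved unfolding \<tau>_def by blast
      then show "x \<in> (\<lambda>\<sigma>. \<tau> \<circ> \<sigma> \<circ> inv \<tau>) ` {\<sigma> \<in> Finv Z Y k. \<sigma> b \<noteq> b}" using s by blast
    qed
  qed
  then show ?thesis by (rule bij_betw_same_card)
qed



lemma cnt_bound:
  assumes fin: "finite Z" "finite Y" and dj: "Z \<inter> Y = {}" and cz: "card Z = m" and cy: "card Y = m"
  shows "card {\<sigma>\<in>Finv Z Y k. \<sigma> b \<noteq> b} * m \<le> k * card (Finv Z Y k)"
proof (cases "b \<in> Z \<union> Y")
  case False
  have "{\<sigma>\<in>Finv Z Y k. \<sigma> b \<noteq> b} = {}"
  proof -
    have "\<sigma> b = b" if "\<sigma> \<in> Finv Z Y k" for \<sigma>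
      using permutes_not_in[OF Finv_D(1)[OF that] False] .
    then show "{\<sigma>\<in>Finv Z Y k. \<sigma> b \<noteq> b} = {}" by blast
  qed
  then have "card {\<sigma>\<in>Finv Z Y k. \<sigma> b \<noteq> b} = 0" by (simp only: card.empty)
  then show ?thesis by simp
next
  case True
  then obtain W where W: "b \<in> W" "W = Z \<or> W = Y" by blast
  have fW: "finite W" and cW: "card W = m" using W fin cz cy by auto
  have fF: "finite (Finv Z Y k)" using finite_Finv fin by blast
  have kW: "card {x\<in>W. \<sigma> x \<noteq> x} = k" if "\<sigma> \<in> Finv Z Y k" for \<sigma>
    using W(2) Finv_D(5)[OF that] Finv_cardY[OF that dj] by blast
  have "(\<Sum>b'\<in>W. card {\<sigma>\<in>Finv Z Y k. \<sigma> b' \<noteq> b'}) = (\<Sum>b'\<in>W. card {\<sigma>\<in>Finv Z Y k. \<sigma> b \<noteq> b})"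
  proof (rule sum.cong[OF refl])
    fix b' assume "b' \<in> W"
    show "card {\<sigma>\<in>Finv Z Y k. \<sigma> b' \<noteq> b'} = card {\<sigma>\<in>Finv Z Y k. \<sigma> b \<noteq> b}"
      using cnt_equal[OF W(1) \<open>b' \<in> W\<close> W(2) dj] by simp
  qed
  also have "\<dots> = m * card {\<sigma>\<in>Finv Z Y k. \<sigma> b \<noteq> b}" using cW by simp
  finally have e1: "(\<Sum>b'\<in>W. card {\<sigma>\<in>Finv Z Y k. \<sigma> b' \<noteq> b'}) = m * card {\<sigma>\<in>Finv Z Y k. \<sigma> b \<noteq> b}" .
  have "(\<Sum>b'\<in>W. card {\<sigma>\<in>Finv Z Y k. \<sigma> b' \<noteq> b'})
      = (\<Sum>b'\<in>W. \<Sum>\<sigma>\<in>Finv Z Y k. if \<sigma> b' \<noteq> b' then 1 else (0::nat))"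
    using fF by (simp add: card_filter_sum)
  also have "\<dots> = (\<Sum>\<sigma>\<in>Finv Z Y k. \<Sum>b'\<in>W. if \<sigma> b' \<noteq> b' then 1 else (0::nat))"
    by (rule sum.swap)
  also have "\<dots> = (\<Sum>\<sigma>\<in>Finv Z Y k. card {x\<in>W. \<sigma> x \<noteq> x})"
    using fW by (simp add: card_filter_sum)
  also have "\<dots> = (\<Sum>\<sigma>\<in>Finv Z Y k. k)" using kW by simp
  also have "\<dots> = k * card (Finv Z Y k)" by simp
  finally show ?thesis using e1 by (simp add: mult.commute)
qed



definition qperm :: "(nat\<Rightarrow>nat) \<Rightarrow> 'w basis \<Rightarrow> 'w basis" where
 "qperm \<phi> s = (case s of (c,a,b,w) \<Rightarrow> (c,a, xor b ((if c then inv \<phi> else \<phi>) a), w))"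

lemma query_op_eq: "query_op \<phi> v = (\<lambda>s. v (qperm \<phi> s))"
  by (auto simp: query_op_def qperm_def fun_eq_iff split: prod.splits)

definition nrm :: "nat \<Rightarrow> 'w qstate \<Rightarrow> real" where
  "nrm n v = L2_set (\<lambda>s. cmod (v s)) (Basis n)"

lemma finite_Basis: "finite (Basis n :: ('w::finite) basis set)"
  unfolding Basis_def by simp

lemma xor_lt: "b < 2^k \<Longrightarrow> x < 2^k \<Longrightarrow> xor b x < (2::nat)^k"
proof -
  assume a: "b < 2^k" "x < 2^k"
  have "take_bit k (xor b x) = xor b x"
    using a by (simp add: take_bit_nat_eq_self_iff[symmetric])
  then show ?thesis by (metis take_bit_nat_less_exp)
qed

lemma xor_xor_nat: "xor (xor b x) x = (b::nat)"
  by (simp add: xor.assoc)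

lemma qperm_inv: "qperm \<phi> (qperm \<phi> s) = s"
  by (auto simp: qperm_def xor_xor_nat split: prod.splits)

lemma qperm_Basis:
  assumes "\<phi> permutes {..<NN n}" "s \<in> Basis n" shows "qperm \<phi> s \<in> Basis n"
proof -
  obtain c a b w where s: "s = (c,a,b,w)" by (cases s) auto
  have ab: "a < NN n" "b < NN n" using assms(2) s by (auto simp: Basis_def)
  have "\<phi> a < NN n" using permutes_in_image[OF assms(1), of a] ab(1) by simp
  moreover have "inv \<phi> a < NN n" using permutes_in_image[OF permutes_inv[OF assms(1)], of a] ab(1) by simp
  ultimately have "(if c then inv \<phi> else \<phi>) a < 2 ^ (2*n)" by (simp add: NN_def)
  then have "xor b ((if c then inv \<phi> else \<phi>) a) < 2 ^ (2*n)"
    using ab(2) by (intro xor_lt) (simp_all add: NN_def)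
  then show ?thesis using s ab by (simp add: Basis_def qperm_def NN_def)
qed

lemma sum_qperm:
  assumes "\<phi> permutes {..<NN n}"
  shows "(\<Sum>s\<in>Basis n. f (qperm \<phi> s)) = (\<Sum>s\<in>Basis n. f s)"
proof -
  have "bij_betw (qperm \<phi>) (Basis n) (Basis n)"
    by (rule bij_betw_byWitness[where f'="qperm \<phi>"]) (auto simp: qperm_inv qperm_Basis[OF assms])
  then show ?thesis by (rule sum.reindex_bij_betw)
qed

lemma nrm_query: "\<phi> permutes {..<NN n} \<Longrightarrow> nrm n (query_op \<phi> v) = nrm n v"
  unfolding nrm_def L2_set_def query_op_eq
  using sum_qperm[of \<phi> n "\<lambda>s. (cmod (v s))\<^sup>2"] by simp

lemma query_diff: "(\<lambda>s. query_op \<phi> u s - query_op \<phi> v s) = query_op \<phi> (\<lambda>s. u s - v s)"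
  by (simp add: query_op_eq)

lemma apply_diff: "(\<lambda>s. apply_mat n U u s - apply_mat n U v s) = apply_mat n U (\<lambda>s. u s - v s)"
  by (simp add: apply_mat_def fun_eq_iff algebra_simps sum_subtractf)

lemma nrm_triangle: "nrm n (\<lambda>s. u s - w s) \<le> nrm n (\<lambda>s. u s - v s) + nrm n (\<lambda>s. v s - w s)"
proof -
  have "nrm n (\<lambda>s. u s - w s) \<le> L2_set (\<lambda>s. cmod (u s - v s) + cmod (v s - w s)) (Basis n)"
    unfolding nrm_def by (rule L2_set_mono) (auto intro: norm_triangle_le_diff order_trans[OF _ norm_triangle_ineq])
  also have "\<dots> \<le> nrm n (\<lambda>s. u s - v s) + nrm n (\<lambda>s. v s - w s)"
    unfolding nrm_def by (rule L2_set_triangle_ineq)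
  finally show ?thesis .
qed



lemma nrm_apply:
  fixes U :: "('w::finite) qmat"
  assumes u: "unitary_mat n U" shows "nrm n (apply_mat n U v) = nrm n v"
proof -
  let ?B = "Basis n :: 'w basis set"
  have "complex_of_real (\<Sum>s\<in>?B. (cmod (\<Sum>t\<in>?B. U s t * v t))\<^sup>2)
      = (\<Sum>s\<in>?B. (\<Sum>t\<in>?B. U s t * v t) * cnj (\<Sum>t'\<in>?B. U s t' * v t'))"
    unfolding of_real_sum complex_norm_square ..
  also have "\<dots> = (\<Sum>s\<in>?B. \<Sum>t\<in>?B. \<Sum>t'\<in>?B. (U s t * v t) * cnj (U s t' * v t'))"
    by (simp add: sum_product)
  also have "\<dots> = (\<Sum>t\<in>?B. \<Sum>s\<in>?B. \<Sum>t'\<in>?B. (U s t * v t) * cnj (U s t' * v t'))"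
    by (rule sum.swap)
  also have "\<dots> = (\<Sum>t\<in>?B. \<Sum>t'\<in>?B. \<Sum>s\<in>?B. (U s t * v t) * cnj (U s t' * v t'))"
    by (rule sum.cong[OF refl], rule sum.swap)
  also have "\<dots> = (\<Sum>t\<in>?B. \<Sum>t'\<in>?B. v t * cnj (v t') * (\<Sum>s\<in>?B. cnj (U s t') * U s t))"
    by (simp add: sum_distrib_left mult_ac)
  also have "\<dots> = (\<Sum>t\<in>?B. \<Sum>t'\<in>?B. v t * cnj (v t') * (if t' = t then 1 else 0))"
    using u unfolding unitary_mat_def by (intro sum.cong refl) simp
  also have "\<dots> = (\<Sum>t\<in>?B. v t * cnj (v t))"
    by (simp add: finite_Basis if_distrib cong: if_cong)
  also have "\<dots> = complex_of_real (\<Sum>t\<in>?B. (cmod (v t))\<^sup>2)"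
    unfolding of_real_sum complex_norm_square ..
  finally have "(\<Sum>s\<in>?B. (cmod (\<Sum>t\<in>?B. U s t * v t))\<^sup>2) = (\<Sum>t\<in>?B. (cmod (v t))\<^sup>2)"
    using of_real_eq_iff by blast
  then show ?thesis unfolding nrm_def L2_set_def apply_mat_def by simp
qed



definition hh :: "(nat\<Rightarrow>nat) \<Rightarrow> 'w basis \<Rightarrow> nat" where
  "hh \<psi> s = (case s of (c,a,b,w) \<Rightarrow> if c then inv \<psi> a else a)"

definition wt :: "nat \<Rightarrow> (nat\<Rightarrow>nat) \<Rightarrow> (nat\<Rightarrow>nat) \<Rightarrow> 'w qstate \<Rightarrow> real" where
  "wt n \<psi> \<sigma> v = (\<Sum>s\<in>Basis n. if \<sigma> (hh \<psi> s) \<noteq> hh \<psi> s then (cmod (v s))\<^sup>2 else 0)"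

lemma hh_qperm: "hh \<psi> (qperm \<phi> s) = hh \<psi> s"
  by (auto simp: hh_def qperm_def split: prod.splits)

lemma qperm_same:
  assumes "bij \<psi>" "bij \<sigma>" "\<sigma> (hh \<psi> s) = hh \<psi> s"
  shows "qperm (\<psi> \<circ> \<sigma>) s = qperm \<psi> s"
proof -
  obtain c a b w where s: "s = (c,a,b,w)" by (cases s) auto
  show ?thesis
  proof (cases c)
    case True
    then have f: "\<sigma> (inv \<psi> a) = inv \<psi> a" using assms(3) s by (simp add: hh_def)
    have "inv (\<psi> \<circ> \<sigma>) a = inv \<sigma> (inv \<psi> a)" using o_inv_distrib[OF assms(1,2)] by simp
    also have "\<dots> = inv \<psi> a" using inv_f_eq[OF bij_is_inj[OF assms(2)] f] .
    finally show ?thesis using s True by (simp add: qperm_def)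
  next
    case False
    then have f: "\<sigma> a = a" using assms(3) s by (simp add: hh_def)
    then show ?thesis using s False by (simp add: qperm_def)
  qed
qed

lemma sq_ineq: "(cmod (a - b))\<^sup>2 \<le> 2 * (cmod a)\<^sup>2 + 2 * (cmod b)\<^sup>2"
proof -
  have "cmod (a - b) \<le> cmod a + cmod b" by (rule norm_triangle_ineq4)
  then have "(cmod (a - b))\<^sup>2 \<le> (cmod a + cmod b)\<^sup>2" by (simp add: power_mono)
  also have "\<dots> \<le> 2 * (cmod a)\<^sup>2 + 2 * (cmod b)\<^sup>2"
    using sum_squares_bound[of "cmod a" "cmod b"] by (simp add: power2_eq_square algebra_simps)
  finally show ?thesis .
qed

lemma qdiff:
  assumes p: "\<psi> permutes {..<NN n}" and s: "\<sigma> permutes {..<NN n}"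
  shows "nrm n (\<lambda>s. query_op (\<psi>\<circ>\<sigma>) y s - query_op \<psi> y s) \<le> 2 * sqrt (wt n \<psi> \<sigma> y)"
proof -
  have pp: "(\<psi>\<circ>\<sigma>) permutes {..<NN n}" by (rule permutes_compose[OF s p])
  define P where "P s = (\<sigma> (hh \<psi> s) \<noteq> hh \<psi> s)" for s :: "'a basis"
  define g where "g s = (if P s then (cmod (y s))\<^sup>2 else 0)" for s
  have "(\<Sum>s\<in>Basis n. (cmod (y (qperm (\<psi>\<circ>\<sigma>) s) - y (qperm \<psi> s)))\<^sup>2)
     \<le> (\<Sum>s\<in>Basis n. 2 * g (qperm (\<psi>\<circ>\<sigma>) s) + 2 * g (qperm \<psi> s))"
  proof (rule sum_mono)
    fix s :: "'a basis" assume "s \<in> Basis n"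
    show "(cmod (y (qperm (\<psi>\<circ>\<sigma>) s) - y (qperm \<psi> s)))\<^sup>2 \<le> 2 * g (qperm (\<psi>\<circ>\<sigma>) s) + 2 * g (qperm \<psi> s)"
    proof (cases "P s")
      case True
      then have "P (qperm (\<psi>\<circ>\<sigma>) s)" "P (qperm \<psi> s)" unfolding P_def hh_qperm by auto
      then show ?thesis unfolding g_def using sq_ineq by simp
    next
      case False
      then have "qperm (\<psi>\<circ>\<sigma>) s = qperm \<psi> s"
        using qperm_same[OF permutes_bij[OF p] permutes_bij[OF s]] unfolding P_def by blast
      then show ?thesis unfolding g_def by simp
    qed
  qed
  also have "\<dots> = 2 * (\<Sum>s\<in>Basis n. g (qperm (\<psi>\<circ>\<sigma>) s)) + 2 * (\<Sum>s\<in>Basis n. g (qperm \<psi> s))"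
    by (simp add: sum.distrib sum_distrib_left)
  also have "\<dots> = 4 * wt n \<psi> \<sigma> y"
  proof -
    have e1: "(\<Sum>s\<in>Basis n. g (qperm (\<psi>\<circ>\<sigma>) s)) = (\<Sum>s\<in>Basis n. g s)" by (rule sum_qperm[OF pp])
    have e2: "(\<Sum>s\<in>Basis n. g (qperm \<psi> s)) = (\<Sum>s\<in>Basis n. g s)" by (rule sum_qperm[OF p])
    have e3: "(\<Sum>s\<in>Basis n. g s) = wt n \<psi> \<sigma> y" unfolding wt_def g_def P_def ..
    show ?thesis unfolding e1 e2 e3 by simp
  qed
  finally have h: "(\<Sum>s\<in>Basis n. (cmod (y (qperm (\<psi>\<circ>\<sigma>) s) - y (qperm \<psi> s)))\<^sup>2) \<le> 4 * wt n \<psi> \<sigma> y" .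
  have "nrm n (\<lambda>s. query_op (\<psi>\<circ>\<sigma>) y s - query_op \<psi> y s)
      = sqrt (\<Sum>s\<in>Basis n. (cmod (y (qperm (\<psi>\<circ>\<sigma>) s) - y (qperm \<psi> s)))\<^sup>2)"
    unfolding nrm_def L2_set_def query_op_eq ..
  also have "\<dots> \<le> sqrt (4 * wt n \<psi> \<sigma> y)" using h by (rule real_sqrt_le_mono)
  also have "\<dots> = 2 * sqrt (wt n \<psi> \<sigma> y)" by (simp add: real_sqrt_mult)
  finally show ?thesis .
qed



fun err :: "nat \<Rightarrow> (nat\<Rightarrow>nat) \<Rightarrow> (nat\<Rightarrow>nat) \<Rightarrow> 'w qmat list \<Rightarrow> 'w qstate \<Rightarrow> real" where
  "err n \<psi> \<sigma> [] v = 0"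
| "err n \<psi> \<sigma> [U] v = 0"
| "err n \<psi> \<sigma> (U # V # Us) v = 2 * sqrt (wt n \<psi> \<sigma> (apply_mat n U v)) + err n \<psi> \<sigma> (V # Us) (query_op \<psi> (apply_mat n U v))"

lemma hybrid:
  fixes Us :: "('w::finite) qmat list"
  assumes p: "\<psi> permutes {..<NN n}" and s: "\<sigma> permutes {..<NN n}"
  shows "\<forall>U\<in>set Us. unitary_mat n U \<Longrightarrow>
    nrm n (\<lambda>s. run n (\<psi>\<circ>\<sigma>) Us v s - run n \<psi> Us v' s) \<le> nrm n (\<lambda>s. v s - v' s) + err n \<psi> \<sigma> Us v'"
proof (induction Us arbitrary: v v' rule: induct_list012)
  case 1
  then show ?case by simp
next
  case (2 U)
  have "nrm n (\<lambda>s. apply_mat n U v s - apply_mat n U v' s) = nrm n (\<lambda>s. v s - v' s)"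
    unfolding apply_diff using 2 by (simp add: nrm_apply)
  then show ?case by simp
next
  case (3 U V Us)
  have pp: "(\<psi>\<circ>\<sigma>) permutes {..<NN n}" by (rule permutes_compose[OF s p])
  define x where "x = apply_mat n U v"
  define y where "y = apply_mat n U v'"
  have uU: "unitary_mat n U" using 3 by simp
  have uVs: "\<forall>U\<in>set (V#Us). unitary_mat n U" using 3 by simp
  have IH: "nrm n (\<lambda>s. run n (\<psi>\<circ>\<sigma>) (V#Us) (query_op (\<psi>\<circ>\<sigma>) x) s - run n \<psi> (V#Us) (query_op \<psi> y) s)
     \<le> nrm n (\<lambda>s. query_op (\<psi>\<circ>\<sigma>) x s - query_op \<psi> y s) + err n \<psi> \<sigma> (V#Us) (query_op \<psi> y)"
    by (rule 3(2)[OF uVs])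
  have t1: "nrm n (\<lambda>s. query_op (\<psi>\<circ>\<sigma>) x s - query_op \<psi> y s)
     \<le> nrm n (\<lambda>s. query_op (\<psi>\<circ>\<sigma>) x s - query_op (\<psi>\<circ>\<sigma>) y s) + nrm n (\<lambda>s. query_op (\<psi>\<circ>\<sigma>) y s - query_op \<psi> y s)"
    by (rule nrm_triangle)
  have t2: "nrm n (\<lambda>s. query_op (\<psi>\<circ>\<sigma>) x s - query_op (\<psi>\<circ>\<sigma>) y s) = nrm n (\<lambda>s. v s - v' s)"
    unfolding query_diff nrm_query[OF pp] x_def y_def apply_diff nrm_apply[OF uU] ..
  have t3: "nrm n (\<lambda>s. query_op (\<psi>\<circ>\<sigma>) y s - query_op \<psi> y s) \<le> 2 * sqrt (wt n \<psi> \<sigma> y)"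
    by (rule qdiff[OF p s])
  from t1 t2 t3 have "nrm n (\<lambda>s. query_op (\<psi>\<circ>\<sigma>) x s - query_op \<psi> y s) \<le> nrm n (\<lambda>s. v s - v' s) + 2 * sqrt (wt n \<psi> \<sigma> y)"
    by linarith
  with IH show ?case unfolding run.simps(3) err.simps(3) x_def[symmetric] y_def[symmetric] by linarith
qed

lemma errsum:
  fixes Us :: "('w::finite) qmat list"
  assumes p: "\<psi> permutes {..<NN n}" and fF: "finite F"
    and wb: "\<And>v::'w qstate. nrm n v \<le> 1 \<Longrightarrow> (\<Sum>\<sigma>\<in>F. sqrt (wt n \<psi> \<sigma> v)) \<le> real (card F) * r"
  shows "\<forall>U\<in>set Us. unitary_mat n U \<Longrightarrow> nrm n v \<le> 1 \<Longrightarrow>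
     (\<Sum>\<sigma>\<in>F. err n \<psi> \<sigma> Us v) \<le> 2 * real (length Us - 1) * real (card F) * r"
proof (induction Us arbitrary: v rule: induct_list012)
  case 1
  then show ?case by simp
next
  case (2 U)
  then show ?case by simp
next
  case (3 U V Us)
  have uU: "unitary_mat n U" using 3 by simp
  define x where "x = apply_mat n U v"
  have nx: "nrm n x \<le> 1" using 3 nrm_apply[OF uU] unfolding x_def by simp
  have nqx: "nrm n (query_op \<psi> x) \<le> 1" by (subst nrm_query[OF p]) (rule nx)
  have uVs: "\<forall>U\<in>set (V#Us). unitary_mat n U" using 3 by simp
  have IH: "(\<Sum>\<sigma>\<in>F. err n \<psi> \<sigma> (V#Us) (query_op \<psi> x)) \<le> 2 * real (length (V#Us) - 1) * real (card F) * r"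
    by (rule 3(2)[OF uVs nqx])
  have "(\<Sum>\<sigma>\<in>F. err n \<psi> \<sigma> (U#V#Us) v)
      = 2 * (\<Sum>\<sigma>\<in>F. sqrt (wt n \<psi> \<sigma> x)) + (\<Sum>\<sigma>\<in>F. err n \<psi> \<sigma> (V#Us) (query_op \<psi> x))"
    by (simp add: x_def sum.distrib sum_distrib_left)
  also have "\<dots> \<le> 2 * (real (card F) * r) + 2 * real (length (V#Us) - 1) * real (card F) * r"
    using wb[OF nx] IH by linarith
  also have "\<dots> = 2 * real (length (U#V#Us) - 1) * real (card F) * r"
    by (simp add: algebra_simps)
  finally show ?case .
qed



definition Zs :: "nat \<Rightarrow> nat set" where "Zs n = (\<lambda>i. i * 2^n) ` {..<2^n}"
definition Yp :: "nat \<Rightarrow> (nat \<Rightarrow> nat) \<Rightarrow> nat set" where "Yp n \<psi> = {x\<in>{..<NN n}. \<psi> x \<in> Zs n}"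

lemma Zs_sub: "Zs n \<subseteq> {..<NN n}"
proof
  fix x assume "x \<in> Zs n"
  then obtain i where i: "i < 2^n" "x = i * 2^n" unfolding Zs_def by blast
  have "i * 2^n < 2^n * 2^n" using i(1) by simp
  also have "(2::nat)^n * 2^n = 2^(2*n)" by (simp add: power_add[symmetric] mult_2)
  finally show "x \<in> {..<NN n}" using i by (simp add: NN_def)
qed

lemma card_Zs: "card (Zs n) = 2^n"
proof -
  have "inj_on (\<lambda>i. i * (2::nat)^n) {..<2^n}" by (rule inj_onI) simp
  then show ?thesis unfolding Zs_def by (simp add: card_image)
qed

lemma finite_Zs: "finite (Zs n)" unfolding Zs_def by simp
lemma finite_Yp: "finite (Yp n \<psi>)" unfolding Yp_def by simp

lemma Zs_mem: "i < 2^n \<Longrightarrow> i * 2^n \<in> Zs n" unfolding Zs_def by blast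

lemma card_Yp:
  assumes p: "\<psi> permutes {..<NN n}" shows "card (Yp n \<psi>) = 2^n"
proof -
  have "bij_betw \<psi> (Yp n \<psi>) (Zs n)"
  proof (rule bij_betw_imageI)
    show "inj_on \<psi> (Yp n \<psi>)" using permutes_inj[OF p] by (rule inj_on_subset) simp
    show "\<psi> ` Yp n \<psi> = Zs n"
    proof (intro equalityI subsetI)
      fix z assume "z \<in> \<psi> ` Yp n \<psi>" then show "z \<in> Zs n" unfolding Yp_def by blast
    next
      fix z assume z: "z \<in> Zs n"
      then have zl: "z \<in> {..<NN n}" using Zs_sub by blast
      have a: "inv \<psi> z \<in> {..<NN n}" using permutes_in_image[OF permutes_inv[OF p]] zl by simp
      have b: "\<psi> (inv \<psi> z) = z" using permutes_inverses(1)[OF p] .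
      have "inv \<psi> z \<in> Yp n \<psi>" unfolding Yp_def using a b z by simp
      then have "\<psi> (inv \<psi> z) \<in> \<psi> ` Yp n \<psi>" by (rule imageI)
      then show "z \<in> \<psi> ` Yp n \<psi>" using b by simp
    qed
  qed
  then show ?thesis using card_Zs bij_betw_same_card by metis
qed

lemma Finv_permutes:
  assumes "\<sigma> \<in> Finv (Zs n) (Yp n \<psi>) k" shows "\<sigma> permutes {..<NN n}"
proof -
  have "Zs n \<union> Yp n \<psi> \<subseteq> {..<NN n}" using Zs_sub unfolding Yp_def by blast
  then show ?thesis using Finv_D(1)[OF assms] permutes_subset by blast
qed

lemma cnt_psi:
  assumes p: "\<psi> permutes {..<NN n}" and z0: "\<forall>z\<in>Zs n. \<psi> z \<notin> Zs n"
  shows "card {\<sigma>\<in>Finv (Zs n) (Yp n \<psi>) k. \<sigma> b \<noteq> b} * 2^n \<le> k * card (Finv (Zs n) (Yp n \<psi>) k)"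
proof (rule cnt_bound)
  show "finite (Zs n)" "finite (Yp n \<psi>)" by (rule finite_Zs, rule finite_Yp)
  show "Zs n \<inter> Yp n \<psi> = {}" using z0 unfolding Yp_def by blast
  show "card (Zs n) = 2^n" by (rule card_Zs)
  show "card (Yp n \<psi>) = 2^n" by (rule card_Yp[OF p])
qed

lemma sum_count:
  fixes g :: "'b \<Rightarrow> real"
  assumes "finite F"
  shows "(\<Sum>\<sigma>\<in>F. \<Sum>s\<in>B. if P \<sigma> s then g s else 0) = (\<Sum>s\<in>B. g s * real (card {\<sigma>\<in>F. P \<sigma> s}))"
proof -
  have "(\<Sum>\<sigma>\<in>F. \<Sum>s\<in>B. if P \<sigma> s then g s else 0) = (\<Sum>s\<in>B. \<Sum>\<sigma>\<in>F. if P \<sigma> s then g s else 0)"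
    by (rule sum.swap)
  also have "\<dots> = (\<Sum>s\<in>B. g s * real (card {\<sigma>\<in>F. P \<sigma> s}))"
  proof (rule sum.cong[OF refl])
    fix s
    have "(\<Sum>\<sigma>\<in>F. if P \<sigma> s then g s else 0) = (\<Sum>\<sigma>\<in>{\<sigma>\<in>F. P \<sigma> s}. g s)"
      using sum.inter_filter[OF assms, of "\<lambda>_. g s" "\<lambda>\<sigma>. P \<sigma> s"] by simp
    also have "\<dots> = g s * real (card {\<sigma>\<in>F. P \<sigma> s})" by simp
    finally show "(\<Sum>\<sigma>\<in>F. if P \<sigma> s then g s else 0) = g s * real (card {\<sigma>\<in>F. P \<sigma> s})" .
  qed
  finally show ?thesis .
qed

lemma sum_sqrt_le:
  assumes "finite F" "\<And>i. i \<in> F \<Longrightarrow> 0 \<le> f i"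
  shows "(\<Sum>i\<in>F. sqrt (f i)) \<le> sqrt (real (card F) * (\<Sum>i\<in>F. f i))"
proof (rule real_le_rsqrt)
  have "(\<Sum>i\<in>F. 1 * sqrt (f i))\<^sup>2 \<le> (\<Sum>i\<in>F. 1\<^sup>2) * (\<Sum>i\<in>F. (sqrt (f i))\<^sup>2)"
    by (rule Cauchy_Schwarz_ineq_sum)
  also have "\<dots> = real (card F) * (\<Sum>i\<in>F. f i)" using assms(2) by simp
  finally show "(\<Sum>i\<in>F. sqrt (f i))\<^sup>2 \<le> real (card F) * (\<Sum>i\<in>F. f i)" by simp
qed



lemma nrm_sq: "(nrm n v)\<^sup>2 = (\<Sum>s\<in>Basis n. (cmod (v s))\<^sup>2)"
  unfolding nrm_def L2_set_def by (simp add: sum_nonneg)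

lemma avgbound:
  fixes g :: "'w basis \<Rightarrow> real" and b :: "'w basis \<Rightarrow> nat"
  assumes p: "\<psi> permutes {..<NN n}" and z0: "\<forall>z\<in>Zs n. \<psi> z \<notin> Zs n"
    and g0: "\<And>s. 0 \<le> g s" and g1: "(\<Sum>s\<in>Basis n. g s) \<le> 1"
  shows "(\<Sum>s\<in>Basis n. g s * real (card {\<sigma>\<in>Finv (Zs n) (Yp n \<psi>) k. \<sigma> (b s) \<noteq> b s}))
     \<le> real k * real (card (Finv (Zs n) (Yp n \<psi>) k)) / 2^n"
proof -
  let ?F = "Finv (Zs n) (Yp n \<psi>) k"
  let ?c = "real k * real (card ?F) / 2^n"
  have c: "real (card {\<sigma>\<in>?F. \<sigma> x \<noteq> x}) \<le> ?c" for x
  proof -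
    have "card {\<sigma>\<in>?F. \<sigma> x \<noteq> x} * 2^n \<le> k * card ?F" by (rule cnt_psi[OF p z0, where k=k and b=x])
    then have "real (card {\<sigma>\<in>?F. \<sigma> x \<noteq> x}) * 2^n \<le> real k * real (card ?F)"
      by (simp only: of_nat_le_iff[symmetric, where 'a=real] of_nat_mult of_nat_numeral of_nat_power)
    then show ?thesis by (simp add: field_simps)
  qed
  have "(\<Sum>s\<in>Basis n. g s * real (card {\<sigma>\<in>?F. \<sigma> (b s) \<noteq> b s})) \<le> (\<Sum>s\<in>Basis n. g s * ?c)"
    by (rule sum_mono) (rule mult_left_mono[OF c g0])
  also have "\<dots> = (\<Sum>s\<in>Basis n. g s) * ?c" by (rule sum_distrib_right[symmetric])
  also have "\<dots> \<le> 1 * ?c" by (rule mult_right_mono[OF g1]) simp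
  finally show ?thesis by simp
qed

lemma wt_bound:
  fixes v :: "('w::finite) qstate"
  assumes p: "\<psi> permutes {..<NN n}" and z0: "\<forall>z\<in>Zs n. \<psi> z \<notin> Zs n" and nv: "nrm n v \<le> 1"
  shows "(\<Sum>\<sigma>\<in>Finv (Zs n) (Yp n \<psi>) k. sqrt (wt n \<psi> \<sigma> v))
     \<le> real (card (Finv (Zs n) (Yp n \<psi>) k)) * sqrt (real k / 2^n)"
proof -
  let ?F = "Finv (Zs n) (Yp n \<psi>) k"
  have fF: "finite ?F" by (rule finite_Finv[OF finite_Zs finite_Yp])
  have g1: "(\<Sum>s\<in>Basis n. (cmod (v s))\<^sup>2) \<le> 1"
    unfolding nrm_sq[symmetric] by (rule power_le_one[OF _ nv]) (simp add: nrm_def)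
  have "(\<Sum>\<sigma>\<in>?F. wt n \<psi> \<sigma> v) = (\<Sum>s\<in>Basis n. (cmod (v s))\<^sup>2 * real (card {\<sigma>\<in>?F. \<sigma> (hh \<psi> s) \<noteq> hh \<psi> s}))"
    unfolding wt_def by (rule sum_count[OF fF])
  also have "\<dots> \<le> real k * real (card ?F) / 2^n"
    by (rule avgbound[OF p z0 _ g1]) simp
  finally have sw: "(\<Sum>\<sigma>\<in>?F. wt n \<psi> \<sigma> v) \<le> real k * real (card ?F) / 2^n" .
  have "(\<Sum>\<sigma>\<in>?F. sqrt (wt n \<psi> \<sigma> v)) \<le> sqrt (real (card ?F) * (\<Sum>\<sigma>\<in>?F. wt n \<psi> \<sigma> v))"
    by (rule sum_sqrt_le[OF fF]) (simp add: wt_def sum_nonneg)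
  also have "\<dots> \<le> sqrt (real (card ?F) * (real k * real (card ?F) / 2^n))"
    by (rule real_sqrt_le_mono, rule mult_left_mono[OF sw]) simp
  also have "\<dots> = real (card ?F) * sqrt (real k / 2^n)"
  proof -
    have e: "real (card ?F) * (real k * real (card ?F) / 2^n) = (real (card ?F))\<^sup>2 * (real k / 2^n)"
      by (simp add: power2_eq_square)
    show ?thesis unfolding e real_sqrt_mult by simp
  qed
  finally show ?thesis .
qed



lemma nrm_run:
  fixes Us :: "('w::finite) qmat list"
  assumes p: "\<phi> permutes {..<NN n}"
  shows "\<forall>U\<in>set Us. unitary_mat n U \<Longrightarrow> nrm n (run n \<phi> Us v) = nrm n v"
proof (induction Us arbitrary: v rule: induct_list012)
  case 1 then show ?case by simp
next
  case (2 U) then show ?case by (simp add: nrm_apply)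
next
  case (3 U V Us)
  have uVs: "\<forall>U\<in>set (V#Us). unitary_mat n U" using 3 by simp
  have uU: "unitary_mat n U" using 3 by simp
  have "nrm n (run n \<phi> (U#V#Us) v) = nrm n (run n \<phi> (V#Us) (query_op \<phi> (apply_mat n U v)))" by simp
  also have "\<dots> = nrm n (query_op \<phi> (apply_mat n U v))" by (rule 3(2)[OF uVs])
  also have "\<dots> = nrm n v" by (simp add: nrm_query[OF p] nrm_apply[OF uU])
  finally show ?case .
qed

lemma nrm_ket: "s0 \<in> Basis n \<Longrightarrow> nrm n (ket s0 :: ('w::finite) qstate) = 1"
proof -
  assume s0: "s0 \<in> Basis n"
  have "(\<Sum>s\<in>Basis n. (cmod (ket s0 s))\<^sup>2) = (\<Sum>s\<in>Basis n. if s = s0 then 1 else (0::real))"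
    by (rule sum.cong) (auto simp: ket_def)
  also have "\<dots> = 1" using s0 by (subst sum.delta[OF finite_Basis]) simp
  finally show ?thesis unfolding nrm_def L2_set_def by simp
qed

lemma L2_sub: "finite B \<Longrightarrow> A \<subseteq> B \<Longrightarrow> L2_set f A \<le> L2_set f B"
  unfolding L2_set_def by (rule real_sqrt_le_mono, rule sum_mono2) auto

lemma sp_eq: fixes Us :: "('w::finite) qmat list" shows "success_prob n \<phi> Us s0 out
   = (L2_set (\<lambda>s. cmod (run n \<phi> Us (ket s0) s)) {s\<in>Basis n. zero_pair n \<phi> (out s)})\<^sup>2"
proof -
  have "(L2_set (\<lambda>s. cmod (run n \<phi> Us (ket s0) s)) {s\<in>Basis n. zero_pair n \<phi> (out s)})\<^sup>2
     = (\<Sum>s\<in>{s\<in>Basis n. zero_pair n \<phi> (out s)}. (cmod (run n \<phi> Us (ket s0) s))\<^sup>2)"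
    unfolding L2_set_def by (simp add: sum_nonneg)
  also have "\<dots> = success_prob n \<phi> Us s0 out"
    unfolding success_prob_def by (rule sum.inter_filter[OF finite_Basis])
  finally show ?thesis ..
qed

lemma sp_le1:
  fixes Us :: "('w::finite) qmat list"
  assumes "\<phi> permutes {..<NN n}" "\<forall>U\<in>set Us. unitary_mat n U" "s0 \<in> Basis n"
  shows "success_prob n \<phi> Us s0 out \<le> 1"
proof -
  have "success_prob n \<phi> Us s0 out \<le> (\<Sum>s\<in>Basis n. (cmod (run n \<phi> Us (ket s0) s))\<^sup>2)"
    unfolding success_prob_def by (rule sum_mono) simp
  also have "\<dots> = (nrm n (run n \<phi> Us (ket s0)))\<^sup>2" by (rule nrm_sq[symmetric])
  also have "\<dots> = 1" using nrm_run[OF assms(1,2)] nrm_ket[OF assms(3)] by simp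
  finally show ?thesis .
qed

lemma sp_nonneg: "0 \<le> success_prob n \<phi> Us s0 out"
  unfolding success_prob_def by (rule sum_nonneg) simp

lemma le_sqrt_self: "0 \<le> x \<Longrightarrow> x \<le> 1 \<Longrightarrow> x \<le> sqrt (x::real)"
proof -
  assume a: "0 \<le> x" "x \<le> 1"
  have "x = sqrt x * sqrt x" using a by simp
  also have "\<dots> \<le> sqrt x * 1" using a by (intro mult_left_mono) auto
  finally show ?thesis by simp
qed

lemma zp_moved:
  assumes "zero_pair n (\<psi> \<circ> \<sigma>) p" "\<forall>z\<in>Zs n. \<psi> z \<notin> Zs n"
  shows "\<sigma> (fst p * 2^n) \<noteq> fst p * 2^n"
proof
  assume f: "\<sigma> (fst p * 2^n) = fst p * 2^n"
  have a: "fst p < 2^n" "snd p < 2^n" "\<psi> (\<sigma> (fst p * 2^n)) = snd p * 2^n"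
    using assms(1) unfolding zero_pair_def by auto
  have "\<psi> (fst p * 2^n) \<in> Zs n" using a f Zs_mem[OF a(2)] by simp
  moreover have "fst p * 2^n \<in> Zs n" by (rule Zs_mem[OF a(1)])
  ultimately show False using assms(2) by blast
qed

lemma sqrt_alg: "sqrt (c * (real k * c / 2^n)) = c * sqrt (real k / 2^n)" if "0 \<le> c" for c :: real
proof -
  have e: "c * (real k * c / 2^n) = c\<^sup>2 * (real k / 2^n)" by (simp add: power2_eq_square)
  show ?thesis unfolding e real_sqrt_mult using that by simp
qed



lemma per_psi:
  fixes Us :: "('w::finite) qmat list"
  assumes p: "\<psi> permutes {..<NN n}" and z0: "\<forall>z\<in>Zs n. \<psi> z \<notin> Zs n"
    and uU: "\<forall>U\<in>set Us. unitary_mat n U" and s0: "s0 \<in> Basis n"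
  shows "(\<Sum>\<sigma>\<in>Finv (Zs n) (Yp n \<psi>) k. success_prob n (\<psi>\<circ>\<sigma>) Us s0 out)
     \<le> (2 * real (length Us - 1) + 1) * real (card (Finv (Zs n) (Yp n \<psi>) k)) * sqrt (real k / 2^n)"
proof -
  let ?F = "Finv (Zs n) (Yp n \<psi>) k"
  let ?r = "sqrt (real k / 2^n)"
  let ?c = "real (card ?F)"
  have fF: "finite ?F" by (rule finite_Finv[OF finite_Zs finite_Yp])
  define u0 where "u0 = run n \<psi> Us (ket s0)"
  define L where "L \<sigma> = L2_set (\<lambda>s. cmod (u0 s)) {s\<in>Basis n. zero_pair n (\<psi>\<circ>\<sigma>) (out s)}" for \<sigma>
  have each: "success_prob n (\<psi>\<circ>\<sigma>) Us s0 out \<le> L \<sigma> + err n \<psi> \<sigma> Us (ket s0)" if sF: "\<sigma> \<in> ?F" for \<sigma>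
  proof -
    have sp: "\<sigma> permutes {..<NN n}" by (rule Finv_permutes[OF sF])
    have pp: "(\<psi>\<circ>\<sigma>) permutes {..<NN n}" by (rule permutes_compose[OF sp p])
    define u where "u = run n (\<psi>\<circ>\<sigma>) Us (ket s0)"
    define Bp where "Bp = {s\<in>Basis n. zero_pair n (\<psi>\<circ>\<sigma>) (out s)}"
    have "success_prob n (\<psi>\<circ>\<sigma>) Us s0 out \<le> sqrt (success_prob n (\<psi>\<circ>\<sigma>) Us s0 out)"
      by (rule le_sqrt_self[OF sp_nonneg sp_le1[OF pp uU s0]])
    also have "\<dots> = L2_set (\<lambda>s. cmod (u s)) Bp"
      unfolding sp_eq u_def Bp_def by simp
    also have "\<dots> \<le> L2_set (\<lambda>s. cmod (u0 s) + cmod (u s - u0 s)) Bp"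
      by (rule L2_set_mono) (auto intro: norm_triangle_sub)
    also have "\<dots> \<le> L2_set (\<lambda>s. cmod (u0 s)) Bp + L2_set (\<lambda>s. cmod (u s - u0 s)) Bp"
      by (rule L2_set_triangle_ineq)
    also have "L2_set (\<lambda>s. cmod (u s - u0 s)) Bp \<le> nrm n (\<lambda>s. u s - u0 s)"
      unfolding nrm_def Bp_def by (rule L2_sub[OF finite_Basis]) blast
    also have "nrm n (\<lambda>s. u s - u0 s) \<le> nrm n (\<lambda>s. ket s0 s - ket s0 s) + err n \<psi> \<sigma> Us (ket s0)"
      unfolding u_def u0_def by (rule hybrid[OF p sp uU])
    also have "nrm n (\<lambda>s. ket s0 s - ket s0 s) = 0" by (simp add: nrm_def L2_set_def)
    finally show ?thesis unfolding L_def Bp_def by linarith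
  qed
  have nu0: "nrm n u0 = 1" unfolding u0_def using nrm_run[OF p uU] nrm_ket[OF s0] by simp
  have g1: "(\<Sum>s\<in>Basis n. (cmod (u0 s))\<^sup>2) \<le> 1" unfolding nrm_sq[symmetric] nu0 by simp
  have sL2: "(\<Sum>\<sigma>\<in>?F. (L \<sigma>)\<^sup>2) \<le> real k * ?c / 2^n"
  proof -
    have "(\<Sum>\<sigma>\<in>?F. (L \<sigma>)\<^sup>2) = (\<Sum>\<sigma>\<in>?F. \<Sum>s\<in>Basis n. if zero_pair n (\<psi>\<circ>\<sigma>) (out s) then (cmod (u0 s))\<^sup>2 else 0)"
    proof (rule sum.cong[OF refl])
      fix \<sigma>
      show "(L \<sigma>)\<^sup>2 = (\<Sum>s\<in>Basis n. if zero_pair n (\<psi>\<circ>\<sigma>) (out s) then (cmod (u0 s))\<^sup>2 else 0)"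
        unfolding L_def L2_set_def using sum.inter_filter[OF finite_Basis]
        by (simp add: sum_nonneg)
    qed
    also have "\<dots> = (\<Sum>s\<in>Basis n. (cmod (u0 s))\<^sup>2 * real (card {\<sigma>\<in>?F. zero_pair n (\<psi>\<circ>\<sigma>) (out s)}))"
      by (rule sum_count[OF fF])
    also have "\<dots> \<le> (\<Sum>s\<in>Basis n. (cmod (u0 s))\<^sup>2 * real (card {\<sigma>\<in>?F. \<sigma> (fst (out s) * 2^n) \<noteq> fst (out s) * 2^n}))"
    proof (rule sum_mono, rule mult_left_mono)
      fix s
      have "{\<sigma>\<in>?F. zero_pair n (\<psi>\<circ>\<sigma>) (out s)} \<subseteq> {\<sigma>\<in>?F. \<sigma> (fst (out s) * 2^n) \<noteq> fst (out s) * 2^n}"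
        using zp_moved z0 by blast
      then show "real (card {\<sigma>\<in>?F. zero_pair n (\<psi>\<circ>\<sigma>) (out s)}) \<le> real (card {\<sigma>\<in>?F. \<sigma> (fst (out s) * 2^n) \<noteq> fst (out s) * 2^n})"
        using fF by (simp add: card_mono)
    qed simp
    also have "\<dots> \<le> real k * ?c / 2^n"
      by (rule avgbound[OF p z0 _ g1]) simp
    finally show ?thesis .
  qed
  have "(\<Sum>\<sigma>\<in>?F. L \<sigma>) = (\<Sum>\<sigma>\<in>?F. sqrt ((L \<sigma>)\<^sup>2))" by (simp add: L_def)
  also have "\<dots> \<le> sqrt (?c * (\<Sum>\<sigma>\<in>?F. (L \<sigma>)\<^sup>2))" by (rule sum_sqrt_le[OF fF]) simp
  also have "\<dots> \<le> sqrt (?c * (real k * ?c / 2^n))"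
    by (rule real_sqrt_le_mono, rule mult_left_mono[OF sL2]) simp
  also have "\<dots> = ?c * ?r" by (rule sqrt_alg) simp
  finally have sumL: "(\<Sum>\<sigma>\<in>?F. L \<sigma>) \<le> ?c * ?r" .
  have sumE: "(\<Sum>\<sigma>\<in>?F. err n \<psi> \<sigma> Us (ket s0)) \<le> 2 * real (length Us - 1) * ?c * ?r"
    by (rule errsum[OF p fF wt_bound[OF p z0] uU], assumption, rule eq_refl, rule nrm_ket[OF s0])
  have "(\<Sum>\<sigma>\<in>?F. success_prob n (\<psi>\<circ>\<sigma>) Us s0 out) \<le> (\<Sum>\<sigma>\<in>?F. L \<sigma> + err n \<psi> \<sigma> Us (ket s0))"
    by (rule sum_mono) (rule each)
  also have "\<dots> = (\<Sum>\<sigma>\<in>?F. L \<sigma>) + (\<Sum>\<sigma>\<in>?F. err n \<psi> \<sigma> Us (ket s0))" by (rule sum.distrib)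
  also have "\<dots> \<le> ?c * ?r + 2 * real (length Us - 1) * ?c * ?r" using sumL sumE by linarith
  also have "\<dots> = (2 * real (length Us - 1) + 1) * ?c * ?r" by (simp add: algebra_simps)
  finally show ?thesis .
qed



definition Aset :: "nat \<Rightarrow> (nat\<Rightarrow>nat) \<Rightarrow> nat set" where "Aset n \<phi> = {z\<in>Zs n. \<phi> z \<in> Zs n}"
definition Gset :: "nat \<Rightarrow> (nat\<Rightarrow>nat) \<Rightarrow> nat set" where
  "Gset n \<phi> = {x\<in>{..<NN n}. x \<notin> Zs n \<and> \<phi> x \<notin> Zs n}"

lemma Zs_iff: "x \<in> Zs n \<longleftrightarrow> (\<exists>i<2^n. x = i * 2^n)" unfolding Zs_def by auto

lemma card_zero_pairs: "card (zero_pairs n \<phi>) = card (Aset n \<phi>)"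
proof -
  have "bij_betw (\<lambda>p. fst p * 2^n) (zero_pairs n \<phi>) (Aset n \<phi>)"
  proof (rule bij_betw_imageI)
    show "inj_on (\<lambda>p. fst p * 2^n) (zero_pairs n \<phi>)"
    proof (rule inj_onI)
      fix p q assume pq: "p \<in> zero_pairs n \<phi>" "q \<in> zero_pairs n \<phi>" "fst p * 2^n = fst q * 2^n"
      then have f: "fst p = fst q" by simp
      have "snd p * 2^n = snd q * 2^n" using pq f unfolding zero_pairs_def zero_pair_def by auto
      then have "snd p = snd q" by simp
      with f show "p = q" by (simp add: prod_eq_iff)
    qed
    show "(\<lambda>p. fst p * 2^n) ` zero_pairs n \<phi> = Aset n \<phi>"
    proof (intro equalityI subsetI)
      fix z assume "z \<in> (\<lambda>p. fst p * 2^n) ` zero_pairs n \<phi>"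
      then obtain p where p: "p \<in> zero_pairs n \<phi>" "z = fst p * 2^n" by blast
      then show "z \<in> Aset n \<phi>" unfolding zero_pairs_def zero_pair_def Aset_def Zs_iff by auto
    next
      fix z assume "z \<in> Aset n \<phi>"
      then obtain i j where ij: "i < 2^n" "z = i * 2^n" "j < 2^n" "\<phi> z = j * 2^n"
        unfolding Aset_def Zs_iff by blast
      then have "(i,j) \<in> zero_pairs n \<phi>" unfolding zero_pairs_def zero_pair_def by simp
      then show "z \<in> (\<lambda>p. fst p * 2^n) ` zero_pairs n \<phi>" using ij(2) by force
    qed
  qed
  then show ?thesis by (rule bij_betw_same_card)
qed

lemma finite_Aset: "finite (Aset n \<phi>)" unfolding Aset_def using finite_Zs by simp
lemma finite_Gset: "finite (Gset n \<phi>)" unfolding Gset_def by simp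

lemma S0_D: "\<psi> \<in> S_kappa n 0 \<Longrightarrow> \<psi> permutes {..<NN n} \<and> (\<forall>z\<in>Zs n. \<psi> z \<notin> Zs n)"
proof -
  assume "\<psi> \<in> S_kappa n 0"
  then have p: "\<psi> permutes {..<NN n}" and c: "card (Aset n \<psi>) = 0"
    unfolding S_kappa_def using card_zero_pairs by auto
  then have "Aset n \<psi> = {}" using finite_Aset by auto
  then show ?thesis using p unfolding Aset_def by blast
qed

lemma Sk_D: "\<phi> \<in> S_kappa n k \<Longrightarrow> \<phi> permutes {..<NN n} \<and> card (Aset n \<phi>) = k"
  unfolding S_kappa_def using card_zero_pairs by auto

lemma fwd:
  assumes ph: "\<phi> \<in> S_kappa n k" and s: "\<sigma> \<in> Finv (Aset n \<phi>) (Gset n \<phi>) k"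
  shows "\<phi> \<circ> \<sigma> \<in> S_kappa n 0" "\<sigma> \<in> Finv (Zs n) (Yp n (\<phi> \<circ> \<sigma>)) k"
proof -
  note sd = Finv_D[OF s]
  have p: "\<phi> permutes {..<NN n}" and cA: "card (Aset n \<phi>) = k" using Sk_D[OF ph] by auto
  have AG: "Aset n \<phi> \<union> Gset n \<phi> \<subseteq> {..<NN n}" using Zs_sub unfolding Aset_def Gset_def by blast
  have sp: "\<sigma> permutes {..<NN n}" using permutes_subset[OF sd(1) AG] .
  have pp: "(\<phi>\<circ>\<sigma>) permutes {..<NN n}" by (rule permutes_compose[OF sp p])
  have fix_out: "\<sigma> x = x" if "x \<notin> Aset n \<phi> \<union> Gset n \<phi>" for x
    by (rule permutes_not_in[OF sd(1) that])
  have GZ: "Gset n \<phi> \<inter> Zs n = {}" unfolding Gset_def by blast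
  have AZ: "Aset n \<phi> \<subseteq> Zs n" unfolding Aset_def by blast
  have movA: "\<sigma> x \<in> Gset n \<phi>" if "x \<in> Aset n \<phi>" for x
  proof -
    have fA: "finite {x\<in>Aset n \<phi>. \<sigma> x \<noteq> x}" using finite_Aset by simp
    have "{x\<in>Aset n \<phi>. \<sigma> x \<noteq> x} = Aset n \<phi>"
      using card_subset_eq[OF finite_Aset _ ] sd(5) cA by (metis (no_types, lifting) mem_Collect_eq subsetI)
    then have "\<sigma> x \<noteq> x" using that by blast
    then show ?thesis using sd(3) that by blast
  qed
  have z0: "\<forall>z\<in>Zs n. (\<phi>\<circ>\<sigma>) z \<notin> Zs n"
  proof
    fix z assume z: "z \<in> Zs n"
    show "(\<phi>\<circ>\<sigma>) z \<notin> Zs n"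
    proof (cases "z \<in> Aset n \<phi>")
      case True
      then have "\<sigma> z \<in> Gset n \<phi>" by (rule movA)
      then show ?thesis unfolding Gset_def by simp
    next
      case False
      then have "z \<notin> Aset n \<phi> \<union> Gset n \<phi>" using z GZ by blast
      then have "\<sigma> z = z" by (rule fix_out)
      then show ?thesis using False z unfolding Aset_def by simp
    qed
  qed
  have "Aset n (\<phi>\<circ>\<sigma>) = {}" using z0 unfolding Aset_def by blast
  then show "\<phi> \<circ> \<sigma> \<in> S_kappa n 0" using pp card_zero_pairs unfolding S_kappa_def by simp
  have inv: "\<And>x. \<sigma> (\<sigma> x) = x" by (rule sd(2))
  have "\<sigma> permutes (Zs n \<union> Yp n (\<phi>\<circ>\<sigma>))"
  proof (rule permutes_superset[OF sd(1)])
    fix x assume x: "x \<in> Aset n \<phi> \<union> Gset n \<phi> - (Zs n \<union> Yp n (\<phi>\<circ>\<sigma>))"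
    show "\<sigma> x = x"
    proof (rule ccontr)
      assume m: "\<sigma> x \<noteq> x"
      have "x \<notin> Aset n \<phi>" using x AZ by blast
      then have xG: "x \<in> Gset n \<phi>" using x by blast
      then have "\<sigma> x \<in> Aset n \<phi>" using sd(4) m by blast
      then have "\<phi> (\<sigma> x) \<in> Zs n" unfolding Aset_def by simp
      then have "x \<in> Yp n (\<phi>\<circ>\<sigma>)" using xG unfolding Yp_def Gset_def by simp
      then show False using x by blast
    qed
  qed
  moreover have "\<forall>x\<in>Zs n. \<sigma> x \<noteq> x \<longrightarrow> \<sigma> x \<in> Yp n (\<phi>\<circ>\<sigma>)"
  proof (intro ballI impI)
    fix x assume x: "x \<in> Zs n" "\<sigma> x \<noteq> x"
    have "x \<in> Aset n \<phi>" using x fix_out GZ by blast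
    then have "\<sigma> x \<in> Gset n \<phi>" "\<phi> x \<in> Zs n" using movA unfolding Aset_def by auto
    then show "\<sigma> x \<in> Yp n (\<phi>\<circ>\<sigma>)" using inv unfolding Yp_def Gset_def by simp
  qed
  moreover have "\<forall>x\<in>Yp n (\<phi>\<circ>\<sigma>). \<sigma> x \<noteq> x \<longrightarrow> \<sigma> x \<in> Zs n"
  proof (intro ballI impI)
    fix x assume x: "x \<in> Yp n (\<phi>\<circ>\<sigma>)" "\<sigma> x \<noteq> x"
    have xAG: "x \<in> Aset n \<phi> \<union> Gset n \<phi>" using x fix_out by blast
    show "\<sigma> x \<in> Zs n"
    proof (cases "x \<in> Aset n \<phi>")
      case True
      then have "\<sigma> x \<in> Gset n \<phi>" by (rule movA)
      then have "\<phi> (\<sigma> x) \<notin> Zs n" unfolding Gset_def by simp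
      then show ?thesis using x unfolding Yp_def by simp
    next
      case False
      then have "x \<in> Gset n \<phi>" using xAG by blast
      then have "\<sigma> x \<in> Aset n \<phi>" using sd(4) x(2) by blast
      then show ?thesis using AZ by blast
    qed
  qed
  moreover have "{x\<in>Zs n. \<sigma> x \<noteq> x} = {x\<in>Aset n \<phi>. \<sigma> x \<noteq> x}"
    using fix_out GZ AZ by blast
  then have "card {x\<in>Zs n. \<sigma> x \<noteq> x} = k" using sd(5) by simp
  ultimately show "\<sigma> \<in> Finv (Zs n) (Yp n (\<phi> \<circ> \<sigma>)) k" unfolding Finv_def using inv by blast
qed



lemma bwd:
  assumes ps: "\<psi> \<in> S_kappa n 0" and s: "\<sigma> \<in> Finv (Zs n) (Yp n \<psi>) k"
  shows "\<psi> \<circ> \<sigma> \<in> S_kappa n k" "\<sigma> \<in> Finv (Aset n (\<psi>\<circ>\<sigma>)) (Gset n (\<psi>\<circ>\<sigma>)) k"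
proof -
  note sd = Finv_D[OF s]
  have p: "\<psi> permutes {..<NN n}" and z0: "\<forall>z\<in>Zs n. \<psi> z \<notin> Zs n" using S0_D[OF ps] by auto
  have sp: "\<sigma> permutes {..<NN n}" by (rule Finv_permutes[OF s])
  have pp: "(\<psi>\<circ>\<sigma>) permutes {..<NN n}" by (rule permutes_compose[OF sp p])
  have inv: "\<And>x. \<sigma> (\<sigma> x) = x" by (rule sd(2))
  have fix_out: "\<sigma> x = x" if "x \<notin> Zs n \<union> Yp n \<psi>" for x
    by (rule permutes_not_in[OF sd(1) that])
  have YZ: "Yp n \<psi> \<inter> Zs n = {}" using z0 unfolding Yp_def by blast
  define M where "M = {z\<in>Zs n. \<sigma> z \<noteq> z}"
  have AM: "Aset n (\<psi>\<circ>\<sigma>) = M"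
  proof (intro equalityI subsetI)
    fix z assume z: "z \<in> Aset n (\<psi>\<circ>\<sigma>)"
    then have zZ: "z \<in> Zs n" "\<psi> (\<sigma> z) \<in> Zs n" unfolding Aset_def by auto
    have "\<sigma> z \<noteq> z"
    proof
      assume "\<sigma> z = z"
      then show False using zZ z0 by auto
    qed
    then show "z \<in> M" using zZ unfolding M_def by blast
  next
    fix z assume "z \<in> M"
    then have z: "z \<in> Zs n" "\<sigma> z \<noteq> z" unfolding M_def by auto
    then have "\<sigma> z \<in> Yp n \<psi>" using sd(3) by blast
    then show "z \<in> Aset n (\<psi>\<circ>\<sigma>)" using z unfolding Yp_def Aset_def by simp
  qed
  have cM: "card M = k" unfolding M_def by (rule sd(5))
  show "\<psi> \<circ> \<sigma> \<in> S_kappa n k" using pp card_zero_pairs AM cM unfolding S_kappa_def by simp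
  have "\<sigma> permutes (Aset n (\<psi>\<circ>\<sigma>) \<union> Gset n (\<psi>\<circ>\<sigma>))"
  proof (rule permutes_superset[OF sd(1)])
    fix x assume x: "x \<in> Zs n \<union> Yp n \<psi> - (Aset n (\<psi>\<circ>\<sigma>) \<union> Gset n (\<psi>\<circ>\<sigma>))"
    show "\<sigma> x = x"
    proof (rule ccontr)
      assume m: "\<sigma> x \<noteq> x"
      show False
      proof (cases "x \<in> Zs n")
        case True
        then have "x \<in> M" using m unfolding M_def by blast
        then show False using x AM by blast
      next
        case False
        then have xY: "x \<in> Yp n \<psi>" using x by blast
        then have sZ: "\<sigma> x \<in> Zs n" using sd(4) m by blast
        have "\<psi> (\<sigma> x) \<notin> Zs n" using z0 sZ by blast
        then have "x \<in> Gset n (\<psi>\<circ>\<sigma>)" using xY False unfolding Yp_def Gset_def by simp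
        then show False using x by blast
      qed
    qed
  qed
  moreover have "\<forall>x\<in>Aset n (\<psi>\<circ>\<sigma>). \<sigma> x \<noteq> x \<longrightarrow> \<sigma> x \<in> Gset n (\<psi>\<circ>\<sigma>)"
  proof (intro ballI impI)
    fix x assume x: "x \<in> Aset n (\<psi>\<circ>\<sigma>)" "\<sigma> x \<noteq> x"
    then have xZ: "x \<in> Zs n" unfolding Aset_def by simp
    then have sY: "\<sigma> x \<in> Yp n \<psi>" using sd(3) x(2) by blast
    then have "\<sigma> x \<notin> Zs n" using YZ by blast
    moreover have "\<psi> (\<sigma> (\<sigma> x)) \<notin> Zs n" using inv z0 xZ by simp
    ultimately show "\<sigma> x \<in> Gset n (\<psi>\<circ>\<sigma>)" using sY unfolding Yp_def Gset_def by simp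
  qed
  moreover have "\<forall>x\<in>Gset n (\<psi>\<circ>\<sigma>). \<sigma> x \<noteq> x \<longrightarrow> \<sigma> x \<in> Aset n (\<psi>\<circ>\<sigma>)"
  proof (intro ballI impI)
    fix x assume x: "x \<in> Gset n (\<psi>\<circ>\<sigma>)" "\<sigma> x \<noteq> x"
    then have "x \<notin> Zs n" unfolding Gset_def by simp
    moreover have "x \<in> Zs n \<union> Yp n \<psi>" using x(2) fix_out by blast
    ultimately have "x \<in> Yp n \<psi>" by blast
    then have "\<sigma> x \<in> Zs n" using sd(4) x(2) by blast
    moreover have "\<sigma> (\<sigma> x) \<noteq> \<sigma> x" using inv x(2) by simp
    ultimately have "\<sigma> x \<in> M" unfolding M_def by blast
    then show "\<sigma> x \<in> Aset n (\<psi>\<circ>\<sigma>)" using AM by simp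
  qed
  moreover have "{x\<in>Aset n (\<psi>\<circ>\<sigma>). \<sigma> x \<noteq> x} = M" using AM unfolding M_def by blast
  then have "card {x\<in>Aset n (\<psi>\<circ>\<sigma>). \<sigma> x \<noteq> x} = k" using cM by simp
  ultimately show "\<sigma> \<in> Finv (Aset n (\<psi>\<circ>\<sigma>)) (Gset n (\<psi>\<circ>\<sigma>)) k" unfolding Finv_def using inv by blast
qed



lemma card_Gset:
  assumes p: "\<phi> permutes {..<NN n}"
  shows "card (Gset n \<phi>) = NN n - (2 * 2^n - card (Aset n \<phi>))"
proof -
  have G: "Gset n \<phi> = {..<NN n} - (Zs n \<union> Yp n \<phi>)" unfolding Gset_def Yp_def by blast
  have I: "Zs n \<inter> Yp n \<phi> = Aset n \<phi>" using Zs_sub unfolding Aset_def Yp_def by blast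
  have U: "card (Zs n \<union> Yp n \<phi>) + card (Aset n \<phi>) = 2 * 2^n"
    using card_Un_Int[OF finite_Zs finite_Yp, of n n \<phi>] card_Zs card_Yp[OF p] I by simp
  have sub: "Zs n \<union> Yp n \<phi> \<subseteq> {..<NN n}" using Zs_sub unfolding Yp_def by blast
  have "card (Gset n \<phi>) = NN n - card (Zs n \<union> Yp n \<phi>)"
    unfolding G using card_Diff_subset[OF finite_subset[OF sub] sub] by simp
  then show ?thesis using U by simp
qed

lemma exists_perm:
  fixes S A G A' G' :: "nat set"
  assumes S: "finite S" and sub: "A \<union> G \<subseteq> S" "A' \<union> G' \<subseteq> S"
    and dj: "A \<inter> G = {}" "A' \<inter> G' = {}"
    and cA: "card A = card A'" and cG: "card G = card G'"
  shows "\<exists>\<pi>. bij \<pi> \<and> \<pi> ` A = A' \<and> \<pi> ` G = G'"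
proof -
  define R where "R = S - (A \<union> G)"
  define R' where "R' = S - (A' \<union> G')"
  have fin: "finite A" "finite G" "finite A'" "finite G'" "finite R" "finite R'"
    using S sub finite_subset unfolding R_def R'_def by auto
  have "card R = card S - card (A \<union> G)" unfolding R_def by (rule card_Diff_subset[OF _ sub(1)]) (use fin in auto)
  also have "card (A \<union> G) = card A + card G" using card_Un_disjoint[OF fin(1,2) dj(1)] .
  also have "card A + card G = card (A' \<union> G')" using card_Un_disjoint[OF fin(3,4) dj(2)] cA cG by simp
  also have "card S - card (A' \<union> G') = card R'" unfolding R'_def by (rule card_Diff_subset[symmetric, OF _ sub(2)]) (use fin in auto)
  finally have cR: "card R = card R'" .
  obtain f1 where f1: "bij_betw f1 A A'" using finite_same_card_bij[OF fin(1,3) cA] by blast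
  obtain f2 where f2: "bij_betw f2 G G'" using finite_same_card_bij[OF fin(2,4) cG] by blast
  obtain f3 where f3: "bij_betw f3 R R'" using finite_same_card_bij[OF fin(5,6) cR] by blast
  define \<pi> where "\<pi> x = (if x \<in> A then f1 x else if x \<in> G then f2 x else if x \<in> R then f3 x else x)" for x
  have b1: "bij_betw \<pi> A A'" using f1 by (rule bij_betw_cong[THEN iffD1, rotated]) (simp add: \<pi>_def)
  have b2: "bij_betw \<pi> G G'" using f2 dj(1) by (subst bij_betw_cong[of G \<pi> f2]) (auto simp: \<pi>_def)
  have b3: "bij_betw \<pi> R R'" using f3 by (subst bij_betw_cong[of R \<pi> f3]) (auto simp: \<pi>_def R_def)
  have "bij_betw \<pi> ((A \<union> G) \<union> R) ((A' \<union> G') \<union> R')"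
    by (rule bij_betw_combine[OF bij_betw_combine[OF b1 b2]  b3]) (use dj in \<open>auto simp: R'_def\<close>)
  moreover have "(A \<union> G) \<union> R = S" "(A' \<union> G') \<union> R' = S" using sub unfolding R_def R'_def by auto
  ultimately have "bij_betw \<pi> S S" by simp
  moreover have "\<pi> x = x" if "x \<notin> S" for x using that sub unfolding \<pi>_def R_def by auto
  ultimately have "\<pi> permutes S" by (rule bij_imp_permutes)
  then have "bij \<pi>" by (rule permutes_bij)
  moreover have "\<pi> ` A = A'" using b1 by (simp add: bij_betw_def)
  moreover have "\<pi> ` G = G'" using b2 by (simp add: bij_betw_def)
  ultimately show ?thesis by blast
qed

lemma AG_props: "Aset n \<phi> \<union> Gset n \<phi> \<subseteq> {..<NN n}" "Aset n \<phi> \<inter> Gset n \<phi> = {}"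
  using Zs_sub unfolding Aset_def Gset_def by auto

lemma fiber_const:
  assumes "\<phi> \<in> S_kappa n k" "\<phi>' \<in> S_kappa n k"
  shows "card (Finv (Aset n \<phi>) (Gset n \<phi>) k) = card (Finv (Aset n \<phi>') (Gset n \<phi>') k)"
proof -
  have p: "\<phi> permutes {..<NN n}" "card (Aset n \<phi>) = k" using Sk_D[OF assms(1)] by auto
  have p': "\<phi>' permutes {..<NN n}" "card (Aset n \<phi>') = k" using Sk_D[OF assms(2)] by auto
  have cG: "card (Gset n \<phi>) = card (Gset n \<phi>')" using card_Gset[OF p(1)] card_Gset[OF p'(1)] p(2) p'(2) by simp
  obtain \<pi> where \<pi>: "bij \<pi>" "\<pi> ` Aset n \<phi> = Aset n \<phi>'" "\<pi> ` Gset n \<phi> = Gset n \<phi>'"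
    using exists_perm[OF _ AG_props(1)[of n \<phi>] AG_props(1)[of n \<phi>'] AG_props(2)[of n \<phi>] AG_props(2)[of n \<phi>']] p(2) p'(2) cG by auto
  have "bij_betw (\<lambda>\<sigma>. \<pi> \<circ> \<sigma> \<circ> inv \<pi>) (Finv (Aset n \<phi>) (Gset n \<phi>) k) (Finv (\<pi> ` Aset n \<phi>) (\<pi> ` Gset n \<phi>) k)"
    by (rule bij_betw_conj_Finv[OF \<pi>(1)])
  then show ?thesis unfolding \<pi>(2,3) by (rule bij_betw_same_card)
qed



lemma matching_Finv:
  assumes dj: "A \<inter> G = {}" and g: "g ` A \<subseteq> G" "inj_on g A" and fA: "finite A"
  shows "(\<lambda>x. if x \<in> A then g x else if x \<in> g ` A then the_inv_into A g x else x) \<in> Finv A G (card A)"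
proof -
  define \<sigma> where "\<sigma> = (\<lambda>x. if x \<in> A then g x else if x \<in> g ` A then the_inv_into A g x else x)"
  have gA: "g x \<notin> A" if "x \<in> A" for x using that g(1) dj by blast
  have inv: "\<sigma> (\<sigma> x) = x" for x
  proof (cases "x \<in> A")
    case True
    then show ?thesis using gA[OF True] the_inv_into_f_f[OF g(2) True] unfolding \<sigma>_def by simp
  next
    case False
    show ?thesis
    proof (cases "x \<in> g ` A")
      case True
      have t: "the_inv_into A g x \<in> A" by (rule the_inv_into_into[OF g(2) True subset_refl])
      show ?thesis using False True t f_the_inv_into_f[OF g(2) True] unfolding \<sigma>_def by simp
    next
      case False2: False
      show ?thesis using False False2 unfolding \<sigma>_def by simp
    qed
  qed
  have "\<sigma> permutes (A \<union> G)"
  proof (rule bij_permutesI)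
    show "bij \<sigma>" by (rule involuntory_imp_bij) (rule inv)
    fix x assume "x \<notin> A \<union> G"
    then show "\<sigma> x = x" using g(1) unfolding \<sigma>_def by auto
  qed
  moreover have "\<forall>x\<in>A. \<sigma> x \<noteq> x \<longrightarrow> \<sigma> x \<in> G" using g(1) unfolding \<sigma>_def by auto
  moreover have "\<forall>x\<in>G. \<sigma> x \<noteq> x \<longrightarrow> \<sigma> x \<in> A"
  proof (intro ballI impI)
    fix x assume x: "x \<in> G" "\<sigma> x \<noteq> x"
    have xA: "x \<notin> A" using x(1) dj by blast
    show "\<sigma> x \<in> A"
    proof (cases "x \<in> g ` A")
      case True
      then show ?thesis using xA the_inv_into_into[OF g(2) True subset_refl] unfolding \<sigma>_def by simp
    next
      case False
      then show ?thesis using xA x(2) unfolding \<sigma>_def by simp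
    qed
  qed
  moreover have "{x\<in>A. \<sigma> x \<noteq> x} = A" using gA unfolding \<sigma>_def by auto (metis gA)
  ultimately show ?thesis unfolding Finv_def \<sigma>_def[symmetric] using inv by simp
qed

lemma fiber_pos:
  assumes n1: "1 \<le> n" and ph: "\<phi> \<in> S_kappa n k" and kb: "k \<le> 2^n"
  shows "card (Finv (Aset n \<phi>) (Gset n \<phi>) k) > 0"
proof -
  have p: "\<phi> permutes {..<NN n}" and cA: "card (Aset n \<phi>) = k" using Sk_D[OF ph] by auto
  have "(2::nat) \<le> 2^n" using n1 by (metis power_one_right power_increasing_iff one_less_numeral_iff semiring_norm(76))
  then have "2 * 2^n \<le> (2::nat)^n * 2^n" by (rule mult_right_mono) simp
  also have "\<dots> = NN n" unfolding NN_def by (simp add: power_add[symmetric] mult_2)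
  finally have NN2: "2 * 2^n \<le> NN n" .
  have "card (Aset n \<phi>) \<le> card (Gset n \<phi>)" using card_Gset[OF p] cA kb NN2 by simp
  then obtain g where g: "g ` Aset n \<phi> \<subseteq> Gset n \<phi>" "inj_on g (Aset n \<phi>)"
    using card_le_inj[OF finite_Aset finite_Gset] by blast
  have "(\<lambda>x. if x \<in> Aset n \<phi> then g x else if x \<in> g ` Aset n \<phi> then the_inv_into (Aset n \<phi>) g x else x)
      \<in> Finv (Aset n \<phi>) (Gset n \<phi>) (card (Aset n \<phi>))"
    by (rule matching_Finv[OF AG_props(2) g finite_Aset])
  then have "Finv (Aset n \<phi>) (Gset n \<phi>) k \<noteq> {}" using cA by auto
  then show ?thesis using finite_Finv[OF finite_Aset finite_Gset] by (simp add: card_gt_0_iff)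
qed



lemma finite_Sk: "finite (S_kappa n k)"
proof -
  have "S_kappa n k \<subseteq> {\<phi>. \<phi> permutes {..<NN n}}" unfolding S_kappa_def by blast
  moreover have "finite {\<phi>. \<phi> permutes {..<NN n}}" by (rule finite_permutations) simp
  ultimately show ?thesis by (rule finite_subset)
qed

lemma bij_R:
  "bij_betw (\<lambda>(x,\<sigma>). (x\<circ>\<sigma>, \<sigma>))
     (SIGMA \<phi>:S_kappa n k. Finv (Aset n \<phi>) (Gset n \<phi>) k)
     (SIGMA \<psi>:S_kappa n 0. Finv (Zs n) (Yp n \<psi>) k)"
proof (rule bij_betw_byWitness[where f'="\<lambda>(x,\<sigma>). (x\<circ>\<sigma>, \<sigma>)"])
  have invo: "(x \<circ> \<sigma>) \<circ> \<sigma> = x" if "\<sigma> \<in> Finv Z Y k" for x \<sigma> Z Y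
    using Finv_D(2)[OF that] by (simp add: fun_eq_iff)
  show "\<forall>a\<in>SIGMA \<phi>:S_kappa n k. Finv (Aset n \<phi>) (Gset n \<phi>) k.
      (\<lambda>(x, \<sigma>). (x \<circ> \<sigma>, \<sigma>)) ((\<lambda>(x, \<sigma>). (x \<circ> \<sigma>, \<sigma>)) a) = a"
    using invo by auto
  show "\<forall>a\<in>SIGMA \<psi>:S_kappa n 0. Finv (Zs n) (Yp n \<psi>) k.
      (\<lambda>(x, \<sigma>). (x \<circ> \<sigma>, \<sigma>)) ((\<lambda>(x, \<sigma>). (x \<circ> \<sigma>, \<sigma>)) a) = a"
    using invo by auto
  show "(\<lambda>(x, \<sigma>). (x \<circ> \<sigma>, \<sigma>)) ` (SIGMA \<phi>:S_kappa n k. Finv (Aset n \<phi>) (Gset n \<phi>) k)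
      \<subseteq> (SIGMA \<psi>:S_kappa n 0. Finv (Zs n) (Yp n \<psi>) k)"
    using fwd by auto
  show "(\<lambda>(x, \<sigma>). (x \<circ> \<sigma>, \<sigma>)) ` (SIGMA \<psi>:S_kappa n 0. Finv (Zs n) (Yp n \<psi>) k)
      \<subseteq> (SIGMA \<phi>:S_kappa n k. Finv (Aset n \<phi>) (Gset n \<phi>) k)"
    using bwd by auto
qed



theorem lemma4:
  fixes n \<kappa> T :: nat and Us :: "('w::finite) qmat list" and s0 :: "'w basis"
    and out :: "'w basis \<Rightarrow> nat \<times> nat" and \<epsilon> :: real
  assumes "1 \<le> \<kappa>" and "\<kappa> \<le> 2 ^ n"
    and "length Us = T + 1"
    and "\<forall>U\<in>set Us. unitary_mat n U"
    and "s0 \<in> Basis n"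
    and "\<epsilon> = avg_success n \<kappa> Us s0 out"
    and "\<epsilon> > 0"
  shows "\<epsilon> \<le> 2 * (real T + 1) * sqrt (real \<kappa> / 2 ^ n)"
proof -
  note k1 = assms(1) and kb = assms(2) and len = assms(3) and uU = assms(4) and s0 = assms(5)
    and eps = assms(6) and epos = assms(7)
  let ?Sk = "S_kappa n \<kappa>"
  let ?sp = "\<lambda>\<phi>. success_prob n \<phi> Us s0 out"
  let ?r = "sqrt (real \<kappa> / 2^n)"
  have fS: "finite ?Sk" by (rule finite_Sk)
  have sp1: "?sp \<phi> \<le> 1" if "\<phi> \<in> ?Sk" for \<phi>
    using sp_le1[OF _ uU s0] Sk_D[OF that] by blast
  have cpos: "card ?Sk > 0"
  proof (rule ccontr)
    assume "\<not> card ?Sk > 0"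
    then have "card ?Sk = 0" by simp
    then have "\<epsilon> = 0" using eps unfolding avg_success_def by simp
    then show False using epos by simp
  qed
  have epsdef: "\<epsilon> = (\<Sum>\<phi>\<in>?Sk. ?sp \<phi>) / real (card ?Sk)" using eps unfolding avg_success_def by simp
  have r0: "0 \<le> ?r" by simp
  show ?thesis
  proof (cases "n = 0")
    case True
    have "(\<Sum>\<phi>\<in>?Sk. ?sp \<phi>) \<le> (\<Sum>\<phi>\<in>?Sk. 1)" by (rule sum_mono) (rule sp1)
    then have "(\<Sum>\<phi>\<in>?Sk. ?sp \<phi>) \<le> real (card ?Sk)" by simp
    then have e1: "\<epsilon> \<le> 1" unfolding epsdef using cpos by (simp add: divide_le_eq_1)
    have h1: "1 \<le> ?r" using True k1 by simp
    have h2: "1 \<le> 2 * (real T + 1)" by simp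
    have "1 * 1 \<le> 2 * (real T + 1) * ?r" by (rule mult_mono[OF h2 h1]) simp_all
    then show ?thesis using e1 by simp
  next
    case False
    then have n1: "1 \<le> n" by simp
    have "?Sk \<noteq> {}" using cpos by (metis card.empty less_irrefl)
    then obtain \<phi>0 where \<phi>0: "\<phi>0 \<in> ?Sk" by blast
    define c where "c = card (Finv (Aset n \<phi>0) (Gset n \<phi>0) \<kappa>)"
    have c0: "c > 0" unfolding c_def by (rule fiber_pos[OF n1 \<phi>0 kb])
    have cF: "card (Finv (Aset n \<phi>) (Gset n \<phi>) \<kappa>) = c" if "\<phi> \<in> ?Sk" for \<phi>
      unfolding c_def by (rule fiber_const[OF that \<phi>0])
    let ?R1 = "SIGMA \<phi>:?Sk. Finv (Aset n \<phi>) (Gset n \<phi>) \<kappa>"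
    let ?S0 = "S_kappa n 0"
    let ?R2 = "SIGMA \<psi>:?S0. Finv (Zs n) (Yp n \<psi>) \<kappa>"
    have fin1: "\<forall>\<phi>\<in>?Sk. finite (Finv (Aset n \<phi>) (Gset n \<phi>) \<kappa>)"
      using finite_Finv[OF finite_Aset finite_Gset] by blast
    have fin2: "\<forall>\<psi>\<in>?S0. finite (Finv (Zs n) (Yp n \<psi>) \<kappa>)"
      using finite_Finv[OF finite_Zs finite_Yp] by blast
    have bR: "bij_betw (\<lambda>(x,\<sigma>). (x\<circ>\<sigma>, \<sigma>)) ?R1 ?R2" by (rule bij_R)
    have "(\<Sum>\<phi>\<in>?Sk. ?sp \<phi>) * real c = (\<Sum>\<phi>\<in>?Sk. \<Sum>\<sigma>\<in>Finv (Aset n \<phi>) (Gset n \<phi>) \<kappa>. ?sp \<phi>)"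
      by (simp add: sum_distrib_right cF mult.commute sum_distrib_left)
    also have "\<dots> = (\<Sum>(\<phi>,\<sigma>)\<in>?R1. ?sp \<phi>)"
      by (rule sum.Sigma[OF fS fin1])
    also have "\<dots> = (\<Sum>p\<in>?R1. (\<lambda>(\<psi>,\<sigma>). ?sp (\<psi>\<circ>\<sigma>)) ((\<lambda>(x,\<sigma>). (x\<circ>\<sigma>, \<sigma>)) p))"
    proof (rule sum.cong[OF refl])
      fix p assume "p \<in> ?R1"
      then obtain \<phi> \<sigma> where p: "p = (\<phi>,\<sigma>)" "\<sigma> \<in> Finv (Aset n \<phi>) (Gset n \<phi>) \<kappa>" by blast
      have "(\<phi> \<circ> \<sigma>) \<circ> \<sigma> = \<phi>" using Finv_D(2)[OF p(2)] by (simp add: fun_eq_iff)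
      then show "(\<lambda>(\<phi>,\<sigma>). ?sp \<phi>) p = (\<lambda>(\<psi>,\<sigma>). ?sp (\<psi>\<circ>\<sigma>)) ((\<lambda>(x,\<sigma>). (x\<circ>\<sigma>, \<sigma>)) p)"
        using p(1) by simp
    qed
    also have "\<dots> = (\<Sum>p\<in>?R2. (\<lambda>(\<psi>,\<sigma>). ?sp (\<psi>\<circ>\<sigma>)) p)"
      by (rule sum.reindex_bij_betw[OF bR])
    also have "\<dots> = (\<Sum>\<psi>\<in>?S0. \<Sum>\<sigma>\<in>Finv (Zs n) (Yp n \<psi>) \<kappa>. ?sp (\<psi>\<circ>\<sigma>))"
      by (rule sum.Sigma[OF finite_Sk fin2, symmetric])
    also have "\<dots> \<le> (\<Sum>\<psi>\<in>?S0. (2 * real T + 1) * real (card (Finv (Zs n) (Yp n \<psi>) \<kappa>)) * ?r)"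
    proof (rule sum_mono)
      fix \<psi> assume "\<psi> \<in> ?S0"
      then have p: "\<psi> permutes {..<NN n}" "\<forall>z\<in>Zs n. \<psi> z \<notin> Zs n" using S0_D by auto
      show "(\<Sum>\<sigma>\<in>Finv (Zs n) (Yp n \<psi>) \<kappa>. ?sp (\<psi>\<circ>\<sigma>)) \<le> (2 * real T + 1) * real (card (Finv (Zs n) (Yp n \<psi>) \<kappa>)) * ?r"
        using per_psi[OF p uU s0, where k=\<kappa> and out=out] len by simp
    qed
    also have "\<dots> = (2 * real T + 1) * ?r * real (card ?R2)"
      using card_SigmaI[OF finite_Sk fin2] by (simp add: sum_distrib_left sum_distrib_right mult_ac)
    also have "card ?R2 = card ?R1" using bij_betw_same_card[OF bR] by simp
    also have "card ?R1 = c * card ?Sk" using card_SigmaI[OF fS fin1] cF by simp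
    finally have main: "(\<Sum>\<phi>\<in>?Sk. ?sp \<phi>) * real c \<le> ((2 * real T + 1) * ?r * real (card ?Sk)) * real c"
      by (simp add: mult_ac)
    then have "(\<Sum>\<phi>\<in>?Sk. ?sp \<phi>) \<le> (2 * real T + 1) * ?r * real (card ?Sk)"
      using c0 by (simp add: mult_le_cancel_right)
    then have "\<epsilon> \<le> (2 * real T + 1) * ?r" unfolding epsdef using cpos by (simp add: divide_le_eq)
    also have "\<dots> \<le> 2 * (real T + 1) * ?r" by (rule mult_right_mono[OF _ r0]) simp
    finally show ?thesis .
  qed
qed

end
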